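(* Let $(G, \phi, (g_1,\dots,g_n))$ be an $n$-expansion group. Then $((L_\bullet(G), [\,,]_G), L_\bullet(\phi))$ is an $n$-expansion Lie algebra.
   Context: $V_{[n]} = \mathbb{F}_2^n$ with basis $e_1,\dots,e_n$. An $n$-expansion group is a triple $(G,\phi,(g_1,\dots,g_n))$: $G$ a group, $\phi: G\to V_{[n]}$ a homomorphism with $\phi(g_i) = e_i$, $g_i^2 = 1$ for all $i$, $\ker\phi$ an elementary abelian $2$-group, and $[G,G]=\ker\phi$. For a group $G$ let $G^{(1)} = G$, $G^{(i+1)} = [G, G^{(i)}]$, $L_m(G) = G^{(m)}/G^{(m+1)}$, $L_\bullet(G) = \bigoplus_{m\geq1}L_m(G)$ with bracket $[\,,]_G$ induced by group commutators (a graded Lie algebra), and for a homomorphism $\phi$, $L_\bullet(\phi)$ the induced graded Lie algebra homomorphism; $V_{[n]}$ is viewed as a graded Lie algebra concentrated in degree $1$ with zero bracket. A graded Lie algebra over $\mathbb{F}_2$ is a Lie algebra $L_\bullet = \bigoplus_{m\geq1}L_m$ over $\mathbb{F}_2$ with $[L_h,L_k]\subseteq L_{h+k}$. An $n$-expansion Lie algebra is a pair $(L_\bullet,\psi)$ with: (1) $L_\bullet$ a graded Lie algebra over $\mathbb{F}_2$ and $\psi: L_\bullet\to V_{[n]}$ a surjective graded Lie algebra homomorphism; (2) $\ker\psi$ an abelian subalgebra; (3) $[L_\bullet,L_\bullet] = \ker\psi$; (4) for each $i\geq4$ and $\sigma_1,\dots,\sigma_i\in L_1$, the element $[\sigma_1,[\sigma_2,[\dots,[\sigma_{i-1},\sigma_i]\dots]]]$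 does not depend on the order of $\sigma_1,\dots,\sigma_{i-2}$ and vanishes whenever $\sigma_s=\sigma_t$ for distinct $s,t\in\{1,\dots,i-2\}$; moreover, if $\tau_1,\tau_2\in L_1$ and $\psi(\tau_1)\in\{e_1,\dots,e_n\}$, then $[\tau_1,[\tau_1,\tau_2]]=0$. *)

theory Defs
  imports "HOL-Algebra.Algebra" "HOL-Library.Multiset"
begin

text \<open>Vectors of F_2^n are encoded as subsets of {1..n} (support of the vector);
  addition is symmetric difference, the basis vector e_i is {i}.
  As a graded Lie algebra it is concentrated in degree 1 with zero bracket;
  the bracket is the ring multiplication field (one is unused).\<close>

definition Vlie :: "nat \<Rightarrow> nat set ring" where
  "Vlie n = \<lparr>carrier = Pow {1..n}, monoid.mult = (\<lambda>_ _. {}), monoid.one = {},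
             ring.zero = {}, ring.add = (\<lambda>A B. (A - B) \<union> (B - A))\<rparr>"

definition Vcomp :: "nat \<Rightarrow> nat \<Rightarrow> nat set set" where
  "Vcomp n m = (if m = 1 then Pow {1..n} else {{}})"

definition basis_vec :: "nat \<Rightarrow> nat set" where
  "basis_vec i = {i}"

definition commutator :: "('g, 'b) monoid_scheme \<Rightarrow> 'g \<Rightarrow> 'g \<Rightarrow> 'g" where
  "commutator G x y = x \<otimes>\<^bsub>G\<^esub> y \<otimes>\<^bsub>G\<^esub> inv\<^bsub>G\<^esub> x \<otimes>\<^bsub>G\<^esub> inv\<^bsub>G\<^esub> y"

primrec lcs :: "('g, 'b) monoid_scheme \<Rightarrow> nat \<Rightarrow> 'g set" where
  "lcs G 0 = carrier G"
| "lcs G (Suc k) = generate G {commutator G x y | x y. x \<in> carrier G \<and> y \<in> lcs G k}"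

text \<open>Gamma G m is G^(m) for m \<ge> 1 (G^(1) = G, G^(i+1) = [G, G^(i)]).\<close>
definition Gamma :: "('g, 'b) monoid_scheme \<Rightarrow> nat \<Rightarrow> 'g set" where
  "Gamma G m = lcs G (m - 1)"

definition expansion_group ::
  "nat \<Rightarrow> ('g, 'b) monoid_scheme \<Rightarrow> ('g \<Rightarrow> nat set) \<Rightarrow> (nat \<Rightarrow> 'g) \<Rightarrow> bool" where
  "expansion_group n G \<phi> g \<longleftrightarrow>
     group G \<and> \<phi> \<in> hom G (add_monoid (Vlie n)) \<and>
     (\<forall>i\<in>{1..n}. g i \<in> carrier G \<and> \<phi> (g i) = basis_vec i \<and> g i \<otimes>\<^bsub>G\<^esub> g i = \<one>\<^bsub>G\<^esub>) \<and>
     (\<forall>x\<in>kernel G (add_monoid (Vlie n)) \<phi>. \<forall>y\<in>kernel G (add_monoid (Vlie n)) \<phi>.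
         x \<otimes>\<^bsub>G\<^esub> y = y \<otimes>\<^bsub>G\<^esub> x) \<and>
     (\<forall>x\<in>kernel G (add_monoid (Vlie n)) \<phi>. x \<otimes>\<^bsub>G\<^esub> x = \<one>\<^bsub>G\<^esub>) \<and>
     Gamma G 2 = kernel G (add_monoid (Vlie n)) \<phi>"

text \<open>An element of L(G) = \<Oplus>_{m\<ge>1} G^(m)/G^(m+1) is a function f on nat with
  f m a coset of G^(m+1) in G^(m) (m \<ge> 1), f 0 = G^(1) as a dummy value, and
  f m = G^(m+1) (the zero coset) for all but finitely many m.\<close>

definition LG_carrier :: "('g, 'b) monoid_scheme \<Rightarrow> (nat \<Rightarrow> 'g set) set" where
  "LG_carrier G = {f. f 0 = Gamma G 1 \<and>
      (\<forall>m\<ge>1. f m \<in> {Gamma G (m + 1) #>\<^bsub>G\<^esub> a | a. a \<in> Gamma G m}) \<and>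
      finite {m. f m \<noteq> Gamma G (m + 1)}}"

definition LG_zero :: "('g, 'b) monoid_scheme \<Rightarrow> nat \<Rightarrow> 'g set" where
  "LG_zero G = (\<lambda>m. Gamma G (m + 1))"

definition LG_add :: "('g, 'b) monoid_scheme \<Rightarrow> (nat \<Rightarrow> 'g set) \<Rightarrow> (nat \<Rightarrow> 'g set) \<Rightarrow> nat \<Rightarrow> 'g set" where
  "LG_add G f f' = (\<lambda>m. f m <#>\<^bsub>G\<^esub> f' m)"

text \<open>Bracket of a class in degree h with a class in degree k: class of the group commutator in degree h+k.\<close>
definition coset_comm :: "('g, 'b) monoid_scheme \<Rightarrow> nat \<Rightarrow> nat \<Rightarrow> 'g set \<Rightarrow> 'g set \<Rightarrow> 'g set" where
  "coset_comm G h k A B =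
     {commutator G x y | x y. x \<in> A \<and> y \<in> B} <#>\<^bsub>G\<^esub> Gamma G (h + k + 1)"

definition LG_bracket :: "('g, 'b) monoid_scheme \<Rightarrow> (nat \<Rightarrow> 'g set) \<Rightarrow> (nat \<Rightarrow> 'g set) \<Rightarrow> nat \<Rightarrow> 'g set" where
  "LG_bracket G f f' = (\<lambda>m.
     foldr (\<lambda>h acc. coset_comm G h (m - h) (f h) (f' (m - h)) <#>\<^bsub>G\<^esub> acc) [1..<m] (Gamma G (m + 1)))"

definition LG :: "('g, 'b) monoid_scheme \<Rightarrow> (nat \<Rightarrow> 'g set) ring" where
  "LG G = \<lparr>carrier = LG_carrier G, monoid.mult = LG_bracket G, monoid.one = LG_zero G,
           ring.zero = LG_zero G, ring.add = LG_add G\<rparr>"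

definition LG_comp :: "('g, 'b) monoid_scheme \<Rightarrow> nat \<Rightarrow> (nat \<Rightarrow> 'g set) set" where
  "LG_comp G m = {f \<in> LG_carrier G. \<forall>k. k \<noteq> m \<longrightarrow> f k = Gamma G (k + 1)}"

text \<open>L(\<phi>): in degree 1 the map G/G^(2) \<rightarrow> V induced by \<phi>; zero in degrees \<ge> 2
  (since L_m(V) = 0 for m \<ge> 2 and L_1(V) = V).\<close>
definition Lphi :: "('g, 'b) monoid_scheme \<Rightarrow> ('g \<Rightarrow> nat set) \<Rightarrow> (nat \<Rightarrow> 'g set) \<Rightarrow> nat set" where
  "Lphi G \<phi> f = \<phi> (SOME x. x \<in> f 1)"

text \<open>A Lie algebra over F_2 is encoded as a ring record: add/zero is the vector
  space structure (an abelian group of exponent 2), mult is the Lie bracket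
  (one is unused). cmp m is the degree-m component (cmp 0 = {0}).\<close>

definition graded_lie_F2 :: "('a, 'c) ring_scheme \<Rightarrow> (nat \<Rightarrow> 'a set) \<Rightarrow> bool" where
  "graded_lie_F2 L cmp \<longleftrightarrow>
     abelian_group L \<and>
     (\<forall>x\<in>carrier L. x \<oplus>\<^bsub>L\<^esub> x = \<zero>\<^bsub>L\<^esub>) \<and>
     (\<forall>x\<in>carrier L. \<forall>y\<in>carrier L. x \<otimes>\<^bsub>L\<^esub> y \<in> carrier L) \<and>
     (\<forall>x\<in>carrier L. \<forall>y\<in>carrier L. \<forall>z\<in>carrier L.
        (x \<oplus>\<^bsub>L\<^esub> y) \<otimes>\<^bsub>L\<^esub> z = x \<otimes>\<^bsub>L\<^esub> z \<oplus>\<^bsub>L\<^esub> y \<otimes>\<^bsub>L\<^esub> z \<and>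
        z \<otimes>\<^bsub>L\<^esub> (x \<oplus>\<^bsub>L\<^esub> y) = z \<otimes>\<^bsub>L\<^esub> x \<oplus>\<^bsub>L\<^esub> z \<otimes>\<^bsub>L\<^esub> y) \<and>
     (\<forall>x\<in>carrier L. x \<otimes>\<^bsub>L\<^esub> x = \<zero>\<^bsub>L\<^esub>) \<and>
     (\<forall>x\<in>carrier L. \<forall>y\<in>carrier L. \<forall>z\<in>carrier L.
        x \<otimes>\<^bsub>L\<^esub> (y \<otimes>\<^bsub>L\<^esub> z) \<oplus>\<^bsub>L\<^esub> y \<otimes>\<^bsub>L\<^esub> (z \<otimes>\<^bsub>L\<^esub> x) \<oplus>\<^bsub>L\<^esub> z \<otimes>\<^bsub>L\<^esub> (x \<otimes>\<^bsub>L\<^esub> y) = \<zero>\<^bsub>L\<^esub>) \<and>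
     cmp 0 = {\<zero>\<^bsub>L\<^esub>} \<and>
     (\<forall>m. subgroup (cmp m) (add_monoid L)) \<and>
     (\<forall>h k x y. x \<in> cmp h \<longrightarrow> y \<in> cmp k \<longrightarrow> x \<otimes>\<^bsub>L\<^esub> y \<in> cmp (h + k)) \<and>
     (\<forall>x\<in>carrier L. \<exists>!c. (\<forall>m. c m \<in> cmp m) \<and> finite {m. c m \<noteq> \<zero>\<^bsub>L\<^esub>} \<and>
        x = (\<Oplus>\<^bsub>L\<^esub>m\<in>{m. c m \<noteq> \<zero>\<^bsub>L\<^esub>}. c m))"

definition graded_lie_hom ::
  "('a, 'c) ring_scheme \<Rightarrow> (nat \<Rightarrow> 'a set) \<Rightarrow> ('e, 'd) ring_scheme \<Rightarrow> (nat \<Rightarrow> 'e set) \<Rightarrow> ('a \<Rightarrow> 'e) \<Rightarrow> bool" where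
  "graded_lie_hom L cL M cM \<psi> \<longleftrightarrow>
     \<psi> \<in> carrier L \<rightarrow> carrier M \<and>
     (\<forall>x\<in>carrier L. \<forall>y\<in>carrier L. \<psi> (x \<oplus>\<^bsub>L\<^esub> y) = \<psi> x \<oplus>\<^bsub>M\<^esub> \<psi> y) \<and>
     (\<forall>x\<in>carrier L. \<forall>y\<in>carrier L. \<psi> (x \<otimes>\<^bsub>L\<^esub> y) = \<psi> x \<otimes>\<^bsub>M\<^esub> \<psi> y) \<and>
     (\<forall>m. \<psi> ` cL m \<subseteq> cM m)"

fun nest :: "('a, 'c) ring_scheme \<Rightarrow> 'a list \<Rightarrow> 'a" where
  "nest L [] = \<zero>\<^bsub>L\<^esub>"
| "nest L [x] = x"
| "nest L (x # y # xs) = x \<otimes>\<^bsub>L\<^esub> nest L (y # xs)"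

definition lie_kernel :: "('a, 'c) ring_scheme \<Rightarrow> ('a \<Rightarrow> nat set) \<Rightarrow> 'a set" where
  "lie_kernel L \<psi> = {x \<in> carrier L. \<psi> x = {}}"

definition expansion_lie ::
  "nat \<Rightarrow> ('a, 'c) ring_scheme \<Rightarrow> (nat \<Rightarrow> 'a set) \<Rightarrow> ('a \<Rightarrow> nat set) \<Rightarrow> bool" where
  "expansion_lie n L cmp \<psi> \<longleftrightarrow>
     \<comment> \<open>(1)\<close>
     graded_lie_F2 L cmp \<and>
     graded_lie_hom L cmp (Vlie n) (Vcomp n) \<psi> \<and>
     \<psi> ` carrier L = carrier (Vlie n) \<and>
     \<comment> \<open>(2) kernel is an abelian subalgebra\<close>
     subgroup (lie_kernel L \<psi>) (add_monoid L) \<and>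
     (\<forall>x\<in>lie_kernel L \<psi>. \<forall>y\<in>lie_kernel L \<psi>. x \<otimes>\<^bsub>L\<^esub> y = \<zero>\<^bsub>L\<^esub>) \<and>
     \<comment> \<open>(3) [L,L] (the span of all brackets) equals the kernel\<close>
     generate (add_monoid L) {x \<otimes>\<^bsub>L\<^esub> y | x y. x \<in> carrier L \<and> y \<in> carrier L} = lie_kernel L \<psi> \<and>
     \<comment> \<open>(4) for i = length ps + 2 \<ge> 4\<close>
     (\<forall>ps qs a b. 2 \<le> length ps \<longrightarrow> set ps \<subseteq> cmp 1 \<longrightarrow> set qs \<subseteq> cmp 1 \<longrightarrow>
        a \<in> cmp 1 \<longrightarrow> b \<in> cmp 1 \<longrightarrow> mset ps = mset qs \<longrightarrow>
        nest L (ps @ [a, b]) = nest L (qs @ [a, b])) \<and>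
     (\<forall>ps a b. 2 \<le> length ps \<longrightarrow> set ps \<subseteq> cmp 1 \<longrightarrow>
        a \<in> cmp 1 \<longrightarrow> b \<in> cmp 1 \<longrightarrow> \<not> distinct ps \<longrightarrow>
        nest L (ps @ [a, b]) = \<zero>\<^bsub>L\<^esub>) \<and>
     (\<forall>t1\<in>cmp 1. \<forall>t2\<in>cmp 1. \<psi> t1 \<in> basis_vec ` {1..n} \<longrightarrow>
        t1 \<otimes>\<^bsub>L\<^esub> (t1 \<otimes>\<^bsub>L\<^esub> t2) = \<zero>\<^bsub>L\<^esub>)"

end

theory Submission
  imports Defs
begin


definition cset :: "('g, 'b) monoid_scheme \<Rightarrow> nat \<Rightarrow> 'g set" where
  "cset G k = {commutator G x y | x y. x \<in> carrier G \<and> y \<in> lcs G k}"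

declare lcs.simps(2)[simp del]

context group
begin

lemma cancel1 [simp]: "x \<in> carrier G \<Longrightarrow> y \<in> carrier G \<Longrightarrow> x \<otimes> (inv x \<otimes> y) = y"
  by (simp add: m_assoc[symmetric])
lemma cancel2 [simp]: "x \<in> carrier G \<Longrightarrow> y \<in> carrier G \<Longrightarrow> inv x \<otimes> (x \<otimes> y) = y"
  by (simp add: m_assoc[symmetric])

lemmas gsimp = m_assoc inv_mult_group

abbreviation cm where "cm x y \<equiv> commutator G x y"

lemma cm_closed [simp]: "x \<in> carrier G \<Longrightarrow> y \<in> carrier G \<Longrightarrow> cm x y \<in> carrier G"
  by (simp add: commutator_def)

lemma cm_inv: "x \<in> carrier G \<Longrightarrow> y \<in> carrier G \<Longrightarrow> inv (cm x y) = cm y x"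
  by (simp add: commutator_def gsimp)

lemma cm_one_l [simp]: "y \<in> carrier G \<Longrightarrow> cm \<one> y = \<one>"
  by (simp add: commutator_def gsimp)
lemma cm_one_r [simp]: "x \<in> carrier G \<Longrightarrow> cm x \<one> = \<one>"
  by (simp add: commutator_def gsimp)

lemma cm_mult_l: "x \<in> carrier G \<Longrightarrow> x' \<in> carrier G \<Longrightarrow> y \<in> carrier G \<Longrightarrow>
   cm (x \<otimes> x') y = (x \<otimes> cm x' y \<otimes> inv x) \<otimes> cm x y"
  by (simp add: commutator_def gsimp)

lemma cm_conj: "x \<in> carrier G \<Longrightarrow> h \<in> carrier G \<Longrightarrow> y \<in> carrier G \<Longrightarrow>
   h \<otimes> cm x y \<otimes> inv h = cm (h \<otimes> x \<otimes> inv h) (h \<otimes> y \<otimes> inv h)"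
  by (simp add: commutator_def gsimp)

lemma cm_swap: "x \<in> carrier G \<Longrightarrow> y \<in> carrier G \<Longrightarrow> x \<otimes> y = cm x y \<otimes> (y \<otimes> x)"
  by (simp add: commutator_def gsimp)

lemma generate_conj:
  assumes S: "S \<subseteq> carrier G" and cl: "\<And>x s. x \<in> carrier G \<Longrightarrow> s \<in> S \<Longrightarrow> x \<otimes> s \<otimes> inv x \<in> S"
    and h: "h \<in> generate G S" and x: "x \<in> carrier G"
  shows "x \<otimes> h \<otimes> inv x \<in> generate G S"
  using h
proof induction
  case one
  then show ?case using x by (simp add: generate.one)
next
  case (incl h)
  then show ?case using cl x by (simp add: generate.incl)
next
  case (inv h)
  have hc: "h \<in> carrier G" using inv S by auto
  have "x \<otimes> inv h \<otimes> inv x = inv (x \<otimes> h \<otimes> inv x)"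
    using hc x by (simp add: gsimp)
  then show ?case using generate.inv[OF cl[OF x inv]] by simp
next
  case (eng h1 h2)
  have c: "h1 \<in> carrier G" "h2 \<in> carrier G" using eng generate_in_carrier[OF S] by auto
  have "x \<otimes> (h1 \<otimes> h2) \<otimes> inv x = (x \<otimes> h1 \<otimes> inv x) \<otimes> (x \<otimes> h2 \<otimes> inv x)"
    using c x by (simp add: gsimp)
  then show ?case using generate.eng[OF eng.IH] by simp
qed


lemma lcs_Suc: "lcs G (Suc k) = generate G (cset G k)"
  by (simp add: cset_def lcs.simps(2))

lemma lcs_normal: "lcs G k \<lhd> G"
proof (induction k)
  case 0
  then show ?case by (simp add: normal_inv_iff subgroup_self)
next
  case (Suc k)
  have sub: "lcs G k \<subseteq> carrier G" using subgroup.subset[OF normal_imp_subgroup[OF Suc]] .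
  have S: "cset G k \<subseteq> carrier G" using sub by (auto simp: cset_def)
  have cl: "x \<otimes> s \<otimes> inv x \<in> cset G k" if xs: "x \<in> carrier G" "s \<in> cset G k" for x s
  proof -
    obtain a b where ab: "s = cm a b" "a \<in> carrier G" "b \<in> lcs G k" using xs(2) unfolding cset_def by blast
    have b: "b \<in> carrier G" using ab sub by auto
    have "x \<otimes> b \<otimes> inv x \<in> lcs G k" using Suc xs(1) ab(3) by (simp add: normal_inv_iff)
    then show ?thesis using cm_conj[OF ab(2) xs(1) b] ab xs(1) unfolding cset_def by blast
  qed
  show ?case unfolding lcs_Suc normal_inv_iff
    using generate_is_subgroup[OF S] generate_conj[OF S cl] by blast
qed

lemma lcs_subgroup: "subgroup (lcs G k) G"
  by (rule normal_imp_subgroup[OF lcs_normal])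

lemma lcs_carrier: "x \<in> lcs G k \<Longrightarrow> x \<in> carrier G"
  by (rule subgroup.mem_carrier[OF lcs_subgroup])

lemma lcs_Suc_sub: "lcs G (Suc k) \<subseteq> lcs G k"
proof -
  have "cset G k \<subseteq> lcs G k"
  proof
    fix s assume "s \<in> cset G k"
    then obtain a b where ab: "s = cm a b" "a \<in> carrier G" "b \<in> lcs G k" unfolding cset_def by blast
    have b: "b \<in> carrier G" using lcs_carrier[OF ab(3)] .
    have "a \<otimes> b \<otimes> inv a \<in> lcs G k" using lcs_normal ab by (simp add: normal_inv_iff)
    moreover have "inv b \<in> lcs G k" using subgroup.m_inv_closed[OF lcs_subgroup ab(3)] .
    ultimately have "(a \<otimes> b \<otimes> inv a) \<otimes> inv b \<in> lcs G k" using subgroup.m_closed[OF lcs_subgroup] by blast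
    then show "s \<in> lcs G k" using ab by (simp add: commutator_def)
  qed
  then show ?thesis unfolding lcs_Suc using generate_subgroup_incl[OF _ lcs_subgroup] by blast
qed

lemma lcs_anti: "i \<le> j \<Longrightarrow> lcs G j \<subseteq> lcs G i"
proof (induction j)
  case 0 then show ?case by simp
next
  case (Suc j)
  then show ?case using lcs_Suc_sub by (metis le_Suc_eq order_trans order_refl)
qed

lemma lcs_one [simp]: "\<one> \<in> lcs G k"
  by (rule subgroup.one_closed[OF lcs_subgroup])
lemma lcs_mult [simp]: "x \<in> lcs G k \<Longrightarrow> y \<in> lcs G k \<Longrightarrow> x \<otimes> y \<in> lcs G k"
  by (rule subgroup.m_closed[OF lcs_subgroup])
lemma lcs_inv [simp]: "x \<in> lcs G k \<Longrightarrow> inv x \<in> lcs G k"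
  by (rule subgroup.m_inv_closed[OF lcs_subgroup])
lemma lcs_conj [simp]: "h \<in> carrier G \<Longrightarrow> x \<in> lcs G k \<Longrightarrow> h \<otimes> x \<otimes> inv h \<in> lcs G k"
  using lcs_normal by (simp add: normal_inv_iff)
lemma cm_lcs: "x \<in> carrier G \<Longrightarrow> y \<in> lcs G k \<Longrightarrow> cm x y \<in> lcs G (Suc k)"
  unfolding lcs_Suc by (rule generate.incl) (auto simp: cset_def)

lemma cm_lcs': "x \<in> carrier G \<Longrightarrow> y \<in> lcs G k \<Longrightarrow> cm y x \<in> lcs G (Suc k)"
proof -
  assume a: "x \<in> carrier G" "y \<in> lcs G k"
  then have "inv (cm x y) \<in> lcs G (Suc k)" using lcs_inv[OF cm_lcs[OF a]] by simp
  then show ?thesis using cm_inv[of x y] lcs_carrier[of y k] a by simp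
qed

lemma lcs_0 [simp]: "lcs G 0 = carrier G" by simp

end


locale expgrp = group G for G :: "('g, 'b) monoid_scheme" (structure) +
  fixes n :: nat and \<phi> :: "'g \<Rightarrow> nat set" and gg :: "nat \<Rightarrow> 'g"
  assumes EG: "expansion_group n G \<phi> gg"
begin

definition A where "A = lcs G (Suc 0)"

lemma A_lcs1: "lcs G 1 = A" "lcs G (Suc 0) = A" by (simp_all add: A_def)

lemma phi_hom: "\<phi> \<in> hom G (add_monoid (Vlie n))"
  using EG by (simp add: expansion_group_def)

lemma phi_mult: "x \<in> carrier G \<Longrightarrow> y \<in> carrier G \<Longrightarrow> \<phi> (x \<otimes> y) = (\<phi> x - \<phi> y) \<union> (\<phi> y - \<phi> x)"
  using hom_mult[OF phi_hom] by (simp add: Vlie_def)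

lemma phi_closed: "x \<in> carrier G \<Longrightarrow> \<phi> x \<subseteq> {1..n}"
  using hom_in_carrier[OF phi_hom] by (force simp add: Vlie_def)

lemma gg_props: "i \<in> {1..n} \<Longrightarrow> gg i \<in> carrier G \<and> \<phi> (gg i) = {i}"
  using EG by (simp add: expansion_group_def basis_vec_def)

lemma lcs1_kernel: "A = kernel G (add_monoid (Vlie n)) \<phi>"
  using EG by (simp add: expansion_group_def Gamma_def A_def)

lemma inA: "x \<in> A \<longleftrightarrow> x \<in> carrier G \<and> \<phi> x = {}"
  by (simp add: lcs1_kernel kernel_def Vlie_def)

lemma A_comm: "x \<in> A \<Longrightarrow> y \<in> A \<Longrightarrow> x \<otimes> y = y \<otimes> x"
  using EG by (simp add: expansion_group_def lcs1_kernel)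

lemma A_sq [simp]: "x \<in> A \<Longrightarrow> x \<otimes> x = \<one>"
  using EG by (simp add: expansion_group_def lcs1_kernel)

lemma A_carrier [simp]: "x \<in> A \<Longrightarrow> x \<in> carrier G"
  unfolding A_def by (rule lcs_carrier)

lemma A_mult [simp]: "x \<in> A \<Longrightarrow> y \<in> A \<Longrightarrow> x \<otimes> y \<in> A"
  unfolding A_def by (rule lcs_mult)

lemma A_one [simp]: "\<one> \<in> A"
  unfolding A_def by (rule lcs_one)

lemma A_inv [simp]: "x \<in> A \<Longrightarrow> inv x = x"
  using A_sq inv_equality by (metis A_carrier)

lemma A_lcomm: "x \<in> A \<Longrightarrow> y \<in> A \<Longrightarrow> z \<in> carrier G \<Longrightarrow> x \<otimes> (y \<otimes> z) = y \<otimes> (x \<otimes> z)"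
  by (metis A_comm A_carrier m_assoc)

lemma A_sq2 [simp]: "x \<in> A \<Longrightarrow> y \<in> carrier G \<Longrightarrow> x \<otimes> (x \<otimes> y) = y"
  by (simp add: m_assoc[symmetric])

lemma sq_A: "x \<in> carrier G \<Longrightarrow> x \<otimes> x \<in> A"
  by (simp add: inA phi_mult del: A_carrier)

lemma lcs_A: "1 \<le> k \<Longrightarrow> x \<in> lcs G k \<Longrightarrow> x \<in> A"
  using lcs_anti[of 1 k] by (simp add: A_lcs1 subset_iff)

lemma lcs_carrier' [simp]: "x \<in> lcs G k \<Longrightarrow> x \<in> carrier G"
  by (rule lcs_carrier)

lemma cm_A [simp]: "x \<in> carrier G \<Longrightarrow> y \<in> carrier G \<Longrightarrow> cm x y \<in> A"
  using cm_lcs[of x y 0] by (simp add: A_def)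

lemma cm_AA: "x \<in> A \<Longrightarrow> y \<in> A \<Longrightarrow> cm x y = \<one>"
  by (simp add: commutator_def m_assoc A_lcomm[of y x])

lemma comm_deg: "x \<in> lcs G i \<Longrightarrow> y \<in> lcs G j \<Longrightarrow> cm x y \<in> lcs G (i + j + 1)"
proof (cases "i = 0")
  case True
  then show "x \<in> lcs G i \<Longrightarrow> y \<in> lcs G j \<Longrightarrow> ?thesis" using cm_lcs[of x y j] by simp
next
  case False
  assume x: "x \<in> lcs G i" and y: "y \<in> lcs G j"
  show ?thesis
  proof (cases "j = 0")
    case True
    then show ?thesis using cm_lcs'[of y x i] x y by simp
  next
    case False
    have "x \<in> A" "y \<in> A" using \<open>i \<noteq> 0\<close> \<open>j \<noteq> 0\<close> x y lcs_A[of i x] lcs_A[of j y] by auto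
    then have "cm x y = \<one>" using cm_AA by simp
    then show ?thesis by simp
  qed
qed

definition act where "act x u = x \<otimes> u \<otimes> inv x"

lemma act_A [simp]: "x \<in> carrier G \<Longrightarrow> u \<in> A \<Longrightarrow> act x u \<in> A"
  unfolding act_def A_def by (rule lcs_conj)

lemma cm_act: "x \<in> carrier G \<Longrightarrow> u \<in> A \<Longrightarrow> cm x u = act x u \<otimes> u"
  by (simp add: act_def commutator_def)

lemma act_mult: "x \<in> carrier G \<Longrightarrow> y \<in> carrier G \<Longrightarrow> u \<in> carrier G \<Longrightarrow> act (x \<otimes> y) u = act x (act y u)"
  by (simp add: act_def gsimp)

lemma act_triv: "a \<in> A \<Longrightarrow> u \<in> A \<Longrightarrow> act a u = u"
  by (simp add: act_def A_comm[of a u] m_assoc)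

lemma act_hom: "x \<in> carrier G \<Longrightarrow> u \<in> carrier G \<Longrightarrow> v \<in> carrier G \<Longrightarrow> act x (u \<otimes> v) = act x u \<otimes> act x v"
  by (simp add: act_def gsimp)

lemma act_swap: "x \<in> carrier G \<Longrightarrow> y \<in> carrier G \<Longrightarrow> u \<in> A \<Longrightarrow> act (x \<otimes> y) u = act (y \<otimes> x) u"
proof -
  assume a: "x \<in> carrier G" "y \<in> carrier G" "u \<in> A"
  have "act (x \<otimes> y) u = act (cm x y) (act (y \<otimes> x) u)"
    using a by (simp add: cm_swap[of x y] act_mult)
  also have "\<dots> = act (y \<otimes> x) u" using a by (simp add: act_triv)
  finally show ?thesis .
qed

lemma act_sq: "x \<in> carrier G \<Longrightarrow> u \<in> A \<Longrightarrow> act x (act x u) = u"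
  using act_mult[of x x u, symmetric] act_triv[OF sq_A[of x]] by simp

lemmas Aac = A_comm A_lcomm

lemma GI6: "x \<in> carrier G \<Longrightarrow> y \<in> carrier G \<Longrightarrow> u \<in> A \<Longrightarrow> cm x (cm y u) = cm y (cm x u)"
proof -
  assume a: "x \<in> carrier G" "y \<in> carrier G" "u \<in> A"
  have "cm x (cm y u) = act x (act y u) \<otimes> act x u \<otimes> (act y u \<otimes> u)"
    using a by (simp add: cm_act act_hom)
  also have "\<dots> = act (x \<otimes> y) u \<otimes> act x u \<otimes> (act y u \<otimes> u)"
    using a by (simp add: act_mult)
  also have "\<dots> = act (y \<otimes> x) u \<otimes> act x u \<otimes> (act y u \<otimes> u)"
    using a by (simp add: act_swap)
  also have "\<dots> = act (y \<otimes> x) u \<otimes> act y u \<otimes> (act x u \<otimes> u)"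
    using a by (simp add: m_assoc Aac)
  also have "\<dots> = cm y (cm x u)"
    using a by (simp add: cm_act act_hom act_mult)
  finally show ?thesis .
qed

lemma GI7: "x \<in> carrier G \<Longrightarrow> u \<in> A \<Longrightarrow> cm x (cm x u) = \<one>"
proof -
  assume a: "x \<in> carrier G" "u \<in> A"
  have "cm x (cm x u) = act x (act x u) \<otimes> act x u \<otimes> (act x u \<otimes> u)"
    using a by (simp add: cm_act act_hom)
  also have "\<dots> = u \<otimes> (act x u \<otimes> (act x u \<otimes> u))"
    using a by (simp add: act_sq m_assoc)
  also have "\<dots> = \<one>" using a by simp
  finally show ?thesis .
qed

lemma cm_mult_act: "x \<in> carrier G \<Longrightarrow> x' \<in> carrier G \<Longrightarrow> y \<in> carrier G \<Longrightarrow>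
   cm (x \<otimes> x') y = act x (cm x' y) \<otimes> cm x y"
  using cm_mult_l by (simp add: act_def)

lemma cm_flip: "x \<in> carrier G \<Longrightarrow> y \<in> carrier G \<Longrightarrow> cm x y = cm y x"
  using cm_inv[of y x] cm_A[of y x] A_inv by simp

lemma GI8: assumes a: "a \<in> carrier G" "b \<in> carrier G" "d \<in> carrier G"
  shows "cm a (cm b d) \<otimes> cm b (cm d a) \<otimes> cm d (cm a b) = \<one>"
proof -
  define u where "u = cm b d"
  define v where "v = cm d a"
  define w where "w = cm a b"
  have uvw: "u \<in> A" "v \<in> A" "w \<in> A" using a by (auto simp: u_def v_def w_def)
  have E1: "cm (a \<otimes> b) d = act a u \<otimes> v"
    using a by (simp add: cm_mult_act u_def v_def cm_flip[of a d])
  have "cm (a \<otimes> b) d = cm (w \<otimes> (b \<otimes> a)) d" using a by (simp add: w_def cm_swap[of a b])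
  also have "\<dots> = act w (cm (b \<otimes> a) d) \<otimes> cm w d" using a uvw by (simp add: cm_mult_act)
  also have "\<dots> = cm (b \<otimes> a) d \<otimes> cm d w" using a uvw by (simp add: act_triv cm_flip[of w d])
  also have "\<dots> = act b v \<otimes> u \<otimes> cm d w" using a by (simp add: cm_mult_act u_def v_def cm_flip[of a d])
  finally have E: "act a u \<otimes> v = act b v \<otimes> u \<otimes> cm d w" using E1 by simp
  have "cm a (cm b d) \<otimes> cm b (cm d a) \<otimes> cm d (cm a b) = (act a u \<otimes> v) \<otimes> (act b v \<otimes> u \<otimes> cm d w)"
    using a uvw by (simp add: u_def[symmetric] v_def[symmetric] w_def[symmetric] cm_act m_assoc Aac)
  also have "\<dots> = \<one>" using E a uvw by simp
  finally show ?thesis .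
qed

lemma rcos_eq_iff: "a \<in> carrier G \<Longrightarrow> b \<in> carrier G \<Longrightarrow>
   (lcs G k #> a = lcs G k #> b) \<longleftrightarrow> a \<otimes> inv b \<in> lcs G k"
proof
  assume ab: "a \<in> carrier G" "b \<in> carrier G" and e: "lcs G k #> a = lcs G k #> b"
  have "a \<in> lcs G k #> b" using rcos_self[OF ab(1) lcs_subgroup[of k]] e by simp
  then show "a \<otimes> inv b \<in> lcs G k" using subgroup.rcos_module_imp[OF lcs_subgroup is_group ab(2)] by blast
next
  assume ab: "a \<in> carrier G" "b \<in> carrier G" and e: "a \<otimes> inv b \<in> lcs G k"
  have "a \<in> lcs G k #> b" using subgroup.rcos_module_rev[OF lcs_subgroup is_group ab(2) ab(1) e] .
  then show "lcs G k #> a = lcs G k #> b" using repr_independence[OF _ ab(2) lcs_subgroup] by simp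
qed

lemma rcos_mult: "a \<in> carrier G \<Longrightarrow> b \<in> carrier G \<Longrightarrow> (lcs G k #> a) <#> (lcs G k #> b) = lcs G k #> (a \<otimes> b)"
  by (rule normal.rcos_sum[OF lcs_normal])

lemma rcos_absorb: "t \<in> lcs G k \<Longrightarrow> a \<in> carrier G \<Longrightarrow> lcs G k #> (t \<otimes> a) = lcs G k #> a"
  by (subst rcos_eq_iff) (auto simp: m_assoc dest: lcs_carrier)

lemma rcos_cong_mult: "a \<in> carrier G \<Longrightarrow> b \<in> carrier G \<Longrightarrow> a' \<in> carrier G \<Longrightarrow> b' \<in> carrier G \<Longrightarrow>
  lcs G k #> a = lcs G k #> a' \<Longrightarrow> lcs G k #> b = lcs G k #> b' \<Longrightarrow> lcs G k #> (a \<otimes> b) = lcs G k #> (a' \<otimes> b')"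
  by (metis rcos_mult)

lemma rcos_one: "lcs G k #> \<one> = lcs G k"
  using coset_mult_one[OF subgroup.subset[OF lcs_subgroup]] .

lemma rcos_mem: "t \<in> lcs G k \<Longrightarrow> lcs G k #> t = lcs G k"
  by (rule subgroup.rcos_const[OF lcs_subgroup is_group])

lemma lin_l: assumes "x \<in> lcs G i" "x' \<in> lcs G i" "y \<in> lcs G j"
  shows "lcs G (i + j + 2) #> cm (x \<otimes> x') y = lcs G (i + j + 2) #> (cm x y \<otimes> cm x' y)"
proof -
  define u where "u = cm x' y"
  have u: "u \<in> lcs G (i + j + 1)" using comm_deg assms by (simp add: u_def)
  then have uA: "u \<in> A" using lcs_A[of "i + j + 1" u] by simp
  have c: "x \<in> carrier G" "x' \<in> carrier G" "y \<in> carrier G" using assms by (auto dest: lcs_carrier)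
  have "act x u = cm x u \<otimes> u" using cm_act[OF c(1) uA] c uA by (simp add: m_assoc)
  then have "cm (x \<otimes> x') y = cm x u \<otimes> (u \<otimes> cm x y)"
    using c uA by (simp add: cm_mult_act u_def[symmetric] m_assoc)
  moreover have "cm x u \<in> lcs G (i + j + 2)" using cm_lcs[OF c(1) u] by simp
  ultimately have "lcs G (i + j + 2) #> cm (x \<otimes> x') y = lcs G (i + j + 2) #> (u \<otimes> cm x y)"
    using c uA by (simp add: rcos_absorb)
  then show ?thesis using c uA by (simp add: u_def A_comm)
qed

lemma lin_r: assumes "x \<in> lcs G i" "y \<in> lcs G j" "y' \<in> lcs G j"
  shows "lcs G (i + j + 2) #> cm x (y \<otimes> y') = lcs G (i + j + 2) #> (cm x y \<otimes> cm x y')"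
proof -
  have c: "x \<in> carrier G" "y \<in> carrier G" "y' \<in> carrier G" using assms by (auto dest: lcs_carrier)
  have "lcs G (j + i + 2) #> cm (y \<otimes> y') x = lcs G (j + i + 2) #> (cm y x \<otimes> cm y' x)"
    using lin_l[OF assms(2,3,1)] .
  then show ?thesis using c by (simp add: cm_flip[of x] add.commute)
qed

lemma WD: assumes hk: "1 \<le> h" "1 \<le> k" and a: "a \<in> lcs G (h - 1)" and b: "b \<in> lcs G (k - 1)"
  and x: "x \<in> lcs G h #> a" and y: "y \<in> lcs G k #> b"
  shows "lcs G (h + k) #> cm x y = lcs G (h + k) #> cm a b"
proof -
  obtain n1 where n1: "n1 \<in> lcs G h" "x = n1 \<otimes> a" using x unfolding r_coset_def by blast
  obtain n2 where n2: "n2 \<in> lcs G k" "y = n2 \<otimes> b" using y unfolding r_coset_def by blast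
  have n1': "n1 \<in> lcs G (h - 1)" using n1 lcs_anti[of "h - 1" h] by auto
  have n2': "n2 \<in> lcs G (k - 1)" using n2 lcs_anti[of "k - 1" k] by auto
  have y': "y \<in> lcs G (k - 1)" using n2 n2' b by simp
  have e: "h - 1 + (k - 1) + 2 = h + k" using hk by simp
  have "lcs G (h + k) #> cm x y = lcs G (h + k) #> (cm n1 y \<otimes> cm a y)"
    using lin_l[OF n1' a y', unfolded e] n1 by simp
  also have "\<dots> = lcs G (h + k) #> cm a y"
    using comm_deg[OF n1(1) y'] hk a y' by (simp add: rcos_absorb)
  also have "\<dots> = lcs G (h + k) #> (cm a n2 \<otimes> cm a b)"
    using lin_r[OF a n2' b, unfolded e] n2 by simp
  also have "\<dots> = lcs G (h + k) #> cm a b"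
    using comm_deg[OF a n2(1)] hk a b by (simp add: rcos_absorb)
  finally show ?thesis .
qed

lemma coset_comm_eq: assumes hk: "1 \<le> h" "1 \<le> k" and a: "a \<in> lcs G (h - 1)" and b: "b \<in> lcs G (k - 1)"
  shows "coset_comm G h k (lcs G h #> a) (lcs G k #> b) = lcs G (h + k) #> cm a b"
proof -
  define S where "S = {cm x y | x y. x \<in> lcs G h #> a \<and> y \<in> lcs G k #> b}"
  define N where "N = lcs G (h + k)"
  define c where "c = cm a b"
  have ac: "a \<in> carrier G" "b \<in> carrier G" using a b by (auto dest: lcs_carrier)
  have cc: "c \<in> carrier G" using ac by (simp add: c_def)
  have Sc: "\<And>s. s \<in> S \<Longrightarrow> s \<in> carrier G \<and> N #> s = N #> c"
  proof -
    fix s assume "s \<in> S"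
    then obtain x y where xy: "s = cm x y" "x \<in> lcs G h #> a" "y \<in> lcs G k #> b" by (auto simp: S_def)
    have "x \<in> carrier G" "y \<in> carrier G"
      using xy ac r_coset_subset_G[OF subgroup.subset[OF lcs_subgroup]] by blast+
    then show "s \<in> carrier G \<and> N #> s = N #> c" using WD[OF hk a b xy(2,3)] xy by (simp add: N_def c_def)
  qed
  have cS: "c \<in> S" unfolding S_def c_def using rcos_self[OF ac(1) lcs_subgroup] rcos_self[OF ac(2) lcs_subgroup] by blast
  have "S <#> N = N #> c"
  proof
    show "S <#> N \<subseteq> N #> c"
    proof
      fix z assume "z \<in> S <#> N"
      then obtain s t where st: "s \<in> S" "t \<in> N" "z = s \<otimes> t" unfolding set_mult_def by blast
      have sc: "s \<in> carrier G" "N #> s = N #> c" using Sc[OF st(1)] by auto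
      have tc: "t \<in> carrier G" using st(2) by (simp add: N_def)
      have "N #> z = (N #> s) <#> (N #> t)" by (simp add: N_def st(3) rcos_mult[OF sc(1) tc])
      also have "\<dots> = (N #> c) <#> (N #> \<one>)" using sc st(2) by (simp add: N_def rcos_mem rcos_one)
      also have "\<dots> = N #> c" using cc by (simp add: N_def rcos_mult)
      finally have "N #> z = N #> c" .
      moreover have "z \<in> N #> z" using sc tc st(3) rcos_self[of z N] lcs_subgroup by (simp add: N_def)
      ultimately show "z \<in> N #> c" by simp
    qed
  next
    show "N #> c \<subseteq> S <#> N"
    proof
      fix z assume "z \<in> N #> c"
      then obtain t where t: "t \<in> N" "z = t \<otimes> c" unfolding r_coset_def by blast
      have tc: "t \<in> carrier G" using t by (simp add: N_def)
      have "inv c \<otimes> t \<otimes> inv (inv c) \<in> N" using lcs_conj[of "inv c" t "h + k"] t cc by (simp add: N_def)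
      moreover have "z = c \<otimes> (inv c \<otimes> t \<otimes> inv (inv c))" using t tc cc by (simp add: m_assoc)
      ultimately show "z \<in> S <#> N" using cS unfolding set_mult_def by blast
    qed
  qed
  moreover have "Gamma G (h + k + 1) = N" by (simp add: Gamma_def N_def)
  ultimately show ?thesis by (simp add: coset_comm_def S_def c_def N_def)
qed

end


context expgrp
begin

abbreviation L where "L \<equiv> LG G"

definition fel :: "(nat \<Rightarrow> 'g) \<Rightarrow> nat \<Rightarrow> 'g set" where "fel r = (\<lambda>k. lcs G k #> r k)"
definition rv :: "(nat \<Rightarrow> 'g) \<Rightarrow> bool" where
  "rv r \<longleftrightarrow> (\<forall>k. r k \<in> lcs G (k - 1)) \<and> (\<exists>B. \<forall>k>B. r k = \<one>)"
definition lprod :: "(nat \<Rightarrow> 'g) \<Rightarrow> nat list \<Rightarrow> 'g" where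
  "lprod f hs = foldr (\<lambda>h acc. f h \<otimes> acc) hs \<one>"
definition bprod :: "(nat \<Rightarrow> 'g) \<Rightarrow> (nat \<Rightarrow> 'g) \<Rightarrow> nat \<Rightarrow> 'g" where
  "bprod r s m = lprod (\<lambda>h. cm (r h) (s (m - h))) [1..<m]"

lemma L_simps: "carrier L = LG_carrier G" "ring.add L = LG_add G" "monoid.mult L = LG_bracket G" "ring.zero L = LG_zero G"
  by (simp_all add: LG_def)

lemma Gamma_simps [simp]: "Gamma G (Suc m) = lcs G m" "Gamma G 1 = carrier G"
  by (simp_all add: Gamma_def)

lemma rv_closed: "rv r \<Longrightarrow> r k \<in> lcs G (k - 1)"
  by (simp add: rv_def)

lemma rv_carrier [simp]: "rv r \<Longrightarrow> r k \<in> carrier G"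
  using rv_closed lcs_carrier by blast

lemma fel_carrier: assumes "rv r" shows "fel r \<in> carrier L"
proof -
  obtain B where B: "\<forall>k>B. r k = \<one>" using assms by (auto simp: rv_def)
  have 0: "fel r 0 = carrier G" using rcos_mem[of "r 0" 0] rv_closed[OF assms, of 0] by (simp add: fel_def)
  have m: "\<forall>m\<ge>1. fel r m \<in> {Gamma G (m + 1) #> a | a. a \<in> Gamma G m}"
    using rv_closed[OF assms] by (auto simp: fel_def Gamma_def)
  have "{m. fel r m \<noteq> Gamma G (m + 1)} \<subseteq> {..B}"
    using B by (auto simp: fel_def rcos_one not_le[symmetric])
  then have "finite {m. fel r m \<noteq> Gamma G (m + 1)}" using finite_subset by blast
  then show ?thesis using 0 m by (simp add: L_simps LG_carrier_def)
qed

lemma carrier_fel: assumes f: "f \<in> carrier L" shows "\<exists>r. rv r \<and> f = fel r"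
proof -
  have f0: "f 0 = carrier G" and fm: "\<And>m. m \<ge> 1 \<Longrightarrow> \<exists>a. a \<in> lcs G (m - 1) \<and> f m = lcs G m #> a"
    and fin: "finite {m. f m \<noteq> lcs G m}"
    using f by (auto simp: L_simps LG_carrier_def Gamma_def)
  define r where "r k = (if k \<ge> 1 \<and> f k \<noteq> lcs G k then (SOME a. a \<in> lcs G (k - 1) \<and> f k = lcs G k #> a) else \<one>)" for k
  have r1: "r k \<in> lcs G (k - 1) \<and> f k = lcs G k #> r k" if "k \<ge> 1" for k
  proof (cases "f k = lcs G k")
    case True
    then show ?thesis using that by (simp add: r_def rcos_one)
  next
    case False
    then show ?thesis using that someI_ex[OF fm[OF that]] by (simp add: r_def)
  qed
  obtain B where B: "\<forall>k \<in> {m. f m \<noteq> lcs G m}. k < B" using fin finite_nat_set_iff_bounded by blast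
  have rv: "rv r" unfolding rv_def
  proof (intro conjI allI exI)
    fix k show "r k \<in> lcs G (k - 1)" using r1[of k] by (cases "k \<ge> 1") (auto simp: r_def)
  next
    fix k show "B < k \<longrightarrow> r k = \<one>" using B by (auto simp: r_def)
  qed
  have "f = fel r"
  proof
    fix k show "f k = fel r k"
    proof (cases "k \<ge> 1")
      case True then show ?thesis using r1 by (simp add: fel_def)
    next
      case False then have "k = 0" by simp
      then show ?thesis using f0 rcos_one[of 0] by (simp add: fel_def r_def)
    qed
  qed
  then show ?thesis using rv by blast
qed

lemma rv_one [simp]: "rv (\<lambda>_. \<one>)"
  by (simp add: rv_def)

lemma zero_fel: "ring.zero L = fel (\<lambda>_. \<one>)"
  by (simp add: L_simps LG_zero_def fel_def rcos_one Gamma_def)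

lemma rv_mult: assumes "rv r" "rv s" shows "rv (\<lambda>k. r k \<otimes> s k)"
proof -
  obtain B1 where B1: "\<forall>k>B1. r k = \<one>" using assms by (auto simp: rv_def)
  obtain B2 where B2: "\<forall>k>B2. s k = \<one>" using assms by (auto simp: rv_def)
  show ?thesis unfolding rv_def
  proof (intro conjI allI exI)
    fix k show "r k \<otimes> s k \<in> lcs G (k - 1)" using rv_closed[OF assms(1)] rv_closed[OF assms(2)] by simp
  next
    fix k show "max B1 B2 < k \<longrightarrow> r k \<otimes> s k = \<one>" using B1 B2 by auto
  qed
qed

lemma fel_add: assumes "rv r" "rv s" shows "ring.add L (fel r) (fel s) = fel (\<lambda>k. r k \<otimes> s k)"
  using assms by (simp add: L_simps LG_add_def fel_def rcos_mult)

lemma fel_eq: "(\<And>k. lcs G k #> r k = lcs G k #> s k) \<Longrightarrow> fel r = fel s"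
  by (simp add: fel_def)

lemma fel_eqI: assumes "rv r" "rv s" "\<And>k. k \<ge> 1 \<Longrightarrow> lcs G k #> r k = lcs G k #> s k"
  shows "fel r = fel s"
proof (rule fel_eq)
  fix k show "lcs G k #> r k = lcs G k #> s k"
  proof (cases "k \<ge> 1")
    case True then show ?thesis using assms by simp
  next
    case False then have "k = 0" by simp
    then show ?thesis using rcos_mem[of "r 0" 0] rcos_mem[of "s 0" 0] assms(1,2) by simp
  qed
qed

lemma lprod_Nil [simp]: "lprod f [] = \<one>" by (simp add: lprod_def)
lemma lprod_Cons [simp]: "lprod f (h # hs) = f h \<otimes> lprod f hs" by (simp add: lprod_def)

lemma lprod_in: "(\<And>h. h \<in> set hs \<Longrightarrow> f h \<in> lcs G k) \<Longrightarrow> lprod f hs \<in> lcs G k"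
  by (induction hs) auto

lemma lprod_carrier [simp]: "(\<And>h. h \<in> set hs \<Longrightarrow> f h \<in> carrier G) \<Longrightarrow> lprod f hs \<in> carrier G"
  by (induction hs) auto

lemma lprod_A: "(\<And>h. h \<in> set hs \<Longrightarrow> f h \<in> A) \<Longrightarrow> lprod f hs \<in> A"
  by (induction hs) auto

lemma lprod_ones: "(\<And>h. h \<in> set hs \<Longrightarrow> f h = \<one>) \<Longrightarrow> lprod f hs = \<one>"
  by (induction hs) auto

lemma lprod_single: "distinct hs \<Longrightarrow> (\<And>h. h \<in> set hs \<Longrightarrow> h \<noteq> h0 \<Longrightarrow> f h = \<one>) \<Longrightarrow> f h0 \<in> carrier G \<Longrightarrow>
   lprod f hs = (if h0 \<in> set hs then f h0 else \<one>)"
proof (induction hs)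
  case Nil then show ?case by simp
next
  case (Cons h hs)
  show ?case
  proof (cases "h = h0")
    case True
    then have "lprod f hs = \<one>" using Cons.prems by (intro lprod_ones) auto
    then show ?thesis using True Cons.prems by simp
  next
    case False
    then have "f h = \<one>" using Cons.prems by simp
    then show ?thesis using False Cons by (auto split: if_splits)
  qed
qed

lemma lprod_mult: "(\<And>h. h \<in> set hs \<Longrightarrow> f h \<in> A \<and> g h \<in> A) \<Longrightarrow>
   lprod (\<lambda>h. f h \<otimes> g h) hs = lprod f hs \<otimes> lprod g hs"
proof (induction hs)
  case Nil then show ?case by simp
next
  case (Cons h hs)
  have "lprod f hs \<in> A" "lprod g hs \<in> A" using Cons.prems by (auto intro!: lprod_A)
  then show ?case using Cons by (simp add: m_assoc Aac)
qed

lemma lprod_cong: "(\<And>h. h \<in> set hs \<Longrightarrow> f h \<in> carrier G \<and> g h \<in> carrier G \<and> lcs G k #> f h = lcs G k #> g h) \<Longrightarrow>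
   lcs G k #> lprod f hs = lcs G k #> lprod g hs"
proof (induction hs)
  case Nil then show ?case by simp
next
  case (Cons h hs)
  have c: "lprod f hs \<in> carrier G" "lprod g hs \<in> carrier G" using Cons.prems by auto
  show ?case using Cons c by (simp add: rcos_mult[symmetric])
qed

lemma lprod_remove1: "y \<in> set hs \<Longrightarrow> (\<And>h. h \<in> set hs \<Longrightarrow> f h \<in> A) \<Longrightarrow>
  lprod f hs = f y \<otimes> lprod f (remove1 y hs)"
proof (induction hs)
  case Nil then show ?case by simp
next
  case (Cons h hs)
  show ?case
  proof (cases "h = y")
    case True then show ?thesis by simp
  next
    case False
    then have "y \<in> set hs" using Cons by simp
    moreover have "lprod f (remove1 y hs) \<in> A" using Cons.prems by (intro lprod_A) (meson list.set_intros(2) notin_set_remove1)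
    ultimately show ?thesis using False Cons by (simp add: Aac)
  qed
qed

subsection \<open>Bracket in terms of representatives\<close>

lemma fel_bracket: assumes r: "rv r" and s: "rv s"
  shows "monoid.mult L (fel r) (fel s) = fel (bprod r s)"
proof -
  have aux: "set hs \<subseteq> {1..<m} \<Longrightarrow>
    foldr (\<lambda>h acc. coset_comm G h (m - h) (fel r h) (fel s (m - h)) <#> acc) hs (lcs G m)
      = lcs G m #> lprod (\<lambda>h. cm (r h) (s (m - h))) hs" for hs m
  proof (induction hs)
    case Nil then show ?case by (simp add: rcos_one)
  next
    case (Cons h hs)
    have h: "1 \<le> h" "1 \<le> m - h" "h + (m - h) = m" using Cons.prems by auto
    have "coset_comm G h (m - h) (fel r h) (fel s (m - h)) = lcs G m #> cm (r h) (s (m - h))"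
      using coset_comm_eq[OF h(1,2) rv_closed[OF r] rv_closed[OF s]] h(3) by (simp add: fel_def)
    then show ?case using Cons r s by (simp add: rcos_mult)
  qed
  show ?thesis
  proof
    fix m
    show "monoid.mult L (fel r) (fel s) m = fel (bprod r s) m"
      using aux[of "[1..<m]" m] by (simp add: L_simps LG_bracket_def bprod_def fel_def[of "bprod r s"])
  qed
qed

lemma rv_bprod: assumes r: "rv r" and s: "rv s" shows "rv (bprod r s)"
proof -
  obtain B1 where B1: "\<forall>k>B1. r k = \<one>" using r by (auto simp: rv_def)
  obtain B2 where B2: "\<forall>k>B2. s k = \<one>" using s by (auto simp: rv_def)
  show ?thesis unfolding rv_def
  proof (intro conjI allI exI)
    fix m
    show "bprod r s m \<in> lcs G (m - 1)" unfolding bprod_def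
    proof (rule lprod_in)
      fix h assume "h \<in> set [1..<m]"
      then have e: "h - 1 + (m - h - 1) + 1 = m - 1" by auto
      have X: "cm (r h) (s (m - h)) \<in> lcs G (h - 1 + (m - h - 1) + 1)"
        by (rule comm_deg[OF rv_closed[OF r, of h] rv_closed[OF s, of "m - h"]])
      show "cm (r h) (s (m - h)) \<in> lcs G (m - 1)"
        using X by (simp only: e)
    qed
  next
    fix m show "B1 + B2 < m \<longrightarrow> bprod r s m = \<one>"
    proof
      assume m: "B1 + B2 < m"
      show "bprod r s m = \<one>" unfolding bprod_def
      proof (rule lprod_ones)
        fix h assume "h \<in> set [1..<m]"
        show "cm (r h) (s (m - h)) = \<one>"
        proof (cases "h > B1")
          case True then show ?thesis using B1 s by simp
        next
          case False then have "m - h > B2" using m by simp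
          then show ?thesis using B2 r by simp
        qed
      qed
    qed
  qed
qed

lemma carrier_felE: assumes "x \<in> carrier L" obtains r where "rv r" "x = fel r"
  using carrier_fel[OF assms] by blast

lemma sq_lcs: assumes "1 \<le> k" "a \<in> lcs G (k - 1)" shows "a \<otimes> a \<in> lcs G k"
proof (cases "k = 1")
  case True then show ?thesis using sq_A[of a] assms by (simp add: A_lcs1)
next
  case False
  then have "a \<in> A" using assms lcs_A[of "k - 1" a] by simp
  then show ?thesis by simp
qed

lemma comm_lcs: assumes "1 \<le> k" "a \<in> lcs G (k - 1)" "b \<in> lcs G (k - 1)"
  shows "lcs G k #> (a \<otimes> b) = lcs G k #> (b \<otimes> a)"
proof -
  have "cm a b \<in> lcs G (k - 1 + (k - 1) + 1)" using comm_deg assms by blast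
  moreover have "lcs G (k - 1 + (k - 1) + 1) \<subseteq> lcs G k" using assms lcs_anti by simp
  ultimately have "cm a b \<in> lcs G k" by blast
  then show ?thesis using assms by (subst rcos_eq_iff) (auto simp: commutator_def gsimp)
qed

lemma L_abelian: "abelian_group L"
proof (rule abelian_groupI)
  fix x y assume "x \<in> carrier L" "y \<in> carrier L"
  then show "x \<oplus>\<^bsub>L\<^esub> y \<in> carrier L"
    by (elim carrier_felE) (simp add: fel_add rv_mult fel_carrier)
next
  show "\<zero>\<^bsub>L\<^esub> \<in> carrier L" by (simp add: zero_fel fel_carrier)
next
  fix x y z assume "x \<in> carrier L" "y \<in> carrier L" "z \<in> carrier L"
  then show "x \<oplus>\<^bsub>L\<^esub> y \<oplus>\<^bsub>L\<^esub> z = x \<oplus>\<^bsub>L\<^esub> (y \<oplus>\<^bsub>L\<^esub> z)"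
    by (elim carrier_felE) (simp add: fel_add rv_mult m_assoc)
next
  fix x y assume "x \<in> carrier L" "y \<in> carrier L"
  then show "x \<oplus>\<^bsub>L\<^esub> y = y \<oplus>\<^bsub>L\<^esub> x"
  proof (elim carrier_felE)
    fix r s assume rs: "rv r" "rv s" "x = fel r" "y = fel s"
    have "fel (\<lambda>k. r k \<otimes> s k) = fel (\<lambda>k. s k \<otimes> r k)"
    proof (rule fel_eqI)
      show "rv (\<lambda>k. r k \<otimes> s k)" "rv (\<lambda>k. s k \<otimes> r k)" using rs rv_mult by auto
      fix k :: nat assume "1 \<le> k"
      show "lcs G k #> (r k \<otimes> s k) = lcs G k #> (s k \<otimes> r k)"
        by (rule comm_lcs[OF \<open>1 \<le> k\<close> rv_closed[OF rs(1)] rv_closed[OF rs(2)]])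
    qed
    then show ?thesis using rs by (simp add: fel_add)
  qed
next
  fix x assume "x \<in> carrier L"
  then show "\<zero>\<^bsub>L\<^esub> \<oplus>\<^bsub>L\<^esub> x = x"
    by (elim carrier_felE) (simp add: zero_fel fel_add)
next
  fix x assume x: "x \<in> carrier L"
  show "\<exists>y\<in>carrier L. y \<oplus>\<^bsub>L\<^esub> x = \<zero>\<^bsub>L\<^esub>"
  proof (rule bexI[OF _ x])
    show "x \<oplus>\<^bsub>L\<^esub> x = \<zero>\<^bsub>L\<^esub>" using x
    proof (elim carrier_felE)
      fix r assume r: "rv r" "x = fel r"
      show ?thesis using r
      proof -
        have "fel (\<lambda>k. r k \<otimes> r k) = fel (\<lambda>_. \<one>)"
        proof (rule fel_eqI)
          show "rv (\<lambda>k. r k \<otimes> r k)" using r rv_mult by auto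
          show "rv (\<lambda>_. \<one>)" by simp
          fix k :: nat assume "1 \<le> k"
          show "lcs G k #> (r k \<otimes> r k) = lcs G k #> \<one>"
            using rcos_mem[OF sq_lcs[OF \<open>1 \<le> k\<close> rv_closed[OF r(1)]]] rcos_one by simp
        qed
        then show ?thesis using r by (simp add: fel_add zero_fel)
      qed
    qed
  qed
qed

end


sublocale expgrp \<subseteq> La: abelian_group "LG G"
  by (rule L_abelian)

context expgrp
begin

lemma br_fel: "rv r \<Longrightarrow> rv s \<Longrightarrow> fel r \<otimes>\<^bsub>L\<^esub> fel s = fel (bprod r s)"
  using fel_bracket by simp

lemma add_fel: "rv r \<Longrightarrow> rv s \<Longrightarrow> fel r \<oplus>\<^bsub>L\<^esub> fel s = fel (\<lambda>k. r k \<otimes> s k)"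
  using fel_add by simp

lemma zero_fel': "\<zero>\<^bsub>L\<^esub> = fel (\<lambda>_. \<one>)"
  using zero_fel by simp

lemma br_closed: "x \<in> carrier L \<Longrightarrow> y \<in> carrier L \<Longrightarrow> x \<otimes>\<^bsub>L\<^esub> y \<in> carrier L"
  by (elim carrier_felE) (simp add: br_fel rv_bprod fel_carrier)

lemma bprod_cong_l: assumes r: "rv r" and r': "rv r'" and s: "rv s" and m: "1 \<le> m"
  shows "lcs G m #> bprod (\<lambda>k. r k \<otimes> r' k) s m = lcs G m #> (bprod r s m \<otimes> bprod r' s m)"
proof -
  have "lcs G m #> bprod (\<lambda>k. r k \<otimes> r' k) s m =
        lcs G m #> lprod (\<lambda>h. cm (r h) (s (m - h)) \<otimes> cm (r' h) (s (m - h))) [1..<m]"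
    unfolding bprod_def
  proof (rule lprod_cong)
    fix h assume h: "h \<in> set [1..<m]"
    then have e: "h - 1 + (m - h - 1) + 2 = m" by auto
    have X: "lcs G (h - 1 + (m - h - 1) + 2) #> cm (r h \<otimes> r' h) (s (m - h)) =
          lcs G (h - 1 + (m - h - 1) + 2) #> (cm (r h) (s (m - h)) \<otimes> cm (r' h) (s (m - h)))"
      by (rule lin_l[OF rv_closed[OF r] rv_closed[OF r'] rv_closed[OF s]])
    show "cm (r h \<otimes> r' h) (s (m - h)) \<in> carrier G \<and>
          cm (r h) (s (m - h)) \<otimes> cm (r' h) (s (m - h)) \<in> carrier G \<and>
          lcs G m #> cm (r h \<otimes> r' h) (s (m - h)) = lcs G m #> (cm (r h) (s (m - h)) \<otimes> cm (r' h) (s (m - h)))"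
      using X r r' s by (simp only: e) simp
  qed
  also have "\<dots> = lcs G m #> (bprod r s m \<otimes> bprod r' s m)"
    unfolding bprod_def using r r' s by (subst lprod_mult) auto
  finally show ?thesis .
qed

lemma bprod_cong_r: assumes r: "rv r" and s: "rv s" and s': "rv s'" and m: "1 \<le> m"
  shows "lcs G m #> bprod r (\<lambda>k. s k \<otimes> s' k) m = lcs G m #> (bprod r s m \<otimes> bprod r s' m)"
proof -
  have "lcs G m #> bprod r (\<lambda>k. s k \<otimes> s' k) m =
        lcs G m #> lprod (\<lambda>h. cm (r h) (s (m - h)) \<otimes> cm (r h) (s' (m - h))) [1..<m]"
    unfolding bprod_def
  proof (rule lprod_cong)
    fix h assume h: "h \<in> set [1..<m]"
    then have e: "h - 1 + (m - h - 1) + 2 = m" by auto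
    have X: "lcs G (h - 1 + (m - h - 1) + 2) #> cm (r h) (s (m - h) \<otimes> s' (m - h)) =
          lcs G (h - 1 + (m - h - 1) + 2) #> (cm (r h) (s (m - h)) \<otimes> cm (r h) (s' (m - h)))"
      by (rule lin_r[OF rv_closed[OF r] rv_closed[OF s] rv_closed[OF s']])
    show "cm (r h) (s (m - h) \<otimes> s' (m - h)) \<in> carrier G \<and>
          cm (r h) (s (m - h)) \<otimes> cm (r h) (s' (m - h)) \<in> carrier G \<and>
          lcs G m #> cm (r h) (s (m - h) \<otimes> s' (m - h)) = lcs G m #> (cm (r h) (s (m - h)) \<otimes> cm (r h) (s' (m - h)))"
      using X r s s' by (simp only: e) simp
  qed
  also have "\<dots> = lcs G m #> (bprod r s m \<otimes> bprod r s' m)"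
    unfolding bprod_def using r s s' by (subst lprod_mult) auto
  finally show ?thesis .
qed

lemma br_add_l: assumes "x \<in> carrier L" "y \<in> carrier L" "z \<in> carrier L"
  shows "(x \<oplus>\<^bsub>L\<^esub> y) \<otimes>\<^bsub>L\<^esub> z = x \<otimes>\<^bsub>L\<^esub> z \<oplus>\<^bsub>L\<^esub> y \<otimes>\<^bsub>L\<^esub> z"
  using assms
proof (elim carrier_felE)
  fix r r' s assume a: "rv r" "x = fel r" "rv r'" "y = fel r'" "rv s" "z = fel s"
  have "fel (bprod (\<lambda>k. r k \<otimes> r' k) s) = fel (\<lambda>m. bprod r s m \<otimes> bprod r' s m)"
    by (rule fel_eqI) (use a in \<open>simp_all add: rv_bprod rv_mult bprod_cong_l\<close>)
  then show ?thesis using a by (simp add: add_fel br_fel rv_mult rv_bprod)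
qed

lemma br_add_r: assumes "x \<in> carrier L" "y \<in> carrier L" "z \<in> carrier L"
  shows "z \<otimes>\<^bsub>L\<^esub> (x \<oplus>\<^bsub>L\<^esub> y) = z \<otimes>\<^bsub>L\<^esub> x \<oplus>\<^bsub>L\<^esub> z \<otimes>\<^bsub>L\<^esub> y"
  using assms
proof (elim carrier_felE)
  fix r r' s assume a: "rv r" "x = fel r" "rv r'" "y = fel r'" "rv s" "z = fel s"
  have "fel (bprod s (\<lambda>k. r k \<otimes> r' k)) = fel (\<lambda>m. bprod s r m \<otimes> bprod s r' m)"
    by (rule fel_eqI) (use a in \<open>simp_all add: rv_bprod rv_mult bprod_cong_r\<close>)
  then show ?thesis using a by (simp add: add_fel br_fel rv_mult rv_bprod)
qed

lemma lprod_pair: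
  "distinct hs \<Longrightarrow> (\<And>h. h \<in> set hs \<Longrightarrow> \<sigma> h \<in> set hs \<and> \<sigma> (\<sigma> h) = h \<and> f (\<sigma> h) = f h \<and> f h \<in> A \<and> (\<sigma> h = h \<longrightarrow> f h = \<one>))
   \<Longrightarrow> lprod f hs = \<one>"
proof (induction "length hs" arbitrary: hs rule: less_induct)
  case less
  show ?case
  proof (cases hs)
    case Nil then show ?thesis by simp
  next
    case (Cons x xs)
    have dx: "x \<notin> set xs" "distinct xs" using less.prems Cons by auto
    have Px: "\<sigma> x \<in> set hs" "\<sigma> (\<sigma> x) = x" "f (\<sigma> x) = f x" "f x \<in> A" "\<sigma> x = x \<longrightarrow> f x = \<one>"
      using less.prems(2)[of x] Cons by auto
    show ?thesis
    proof (cases "\<sigma> x = x")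
      case True
      have "lprod f xs = \<one>"
      proof (rule less.hyps)
        show "length xs < length hs" using Cons by simp
        show "distinct xs" using dx by simp
        fix h assume h: "h \<in> set xs"
        have P: "\<sigma> h \<in> set hs" "\<sigma> (\<sigma> h) = h" "f (\<sigma> h) = f h" "f h \<in> A" "\<sigma> h = h \<longrightarrow> f h = \<one>"
          using less.prems(2)[of h] h Cons by auto
        have "\<sigma> h \<noteq> x" using P(2) True h dx by metis
        then show "\<sigma> h \<in> set xs \<and> \<sigma> (\<sigma> h) = h \<and> f (\<sigma> h) = f h \<and> f h \<in> A \<and> (\<sigma> h = h \<longrightarrow> f h = \<one>)"
          using P Cons by auto
      qed
      then show ?thesis using Cons Px True by simp
    next
      case False
      define ys where "ys = remove1 (\<sigma> x) xs"
      have sx: "\<sigma> x \<in> set xs" using Px False Cons by auto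
      have xsA: "\<And>h. h \<in> set xs \<Longrightarrow> f h \<in> A" using less.prems(2) Cons by auto
      have sys: "set ys = set xs - {\<sigma> x}" using dx by (simp add: ys_def)
      have "lprod f ys = \<one>"
      proof (rule less.hyps)
        show "length ys < length hs" using Cons sx by (simp add: ys_def length_remove1)
        show "distinct ys" using dx by (simp add: ys_def)
        fix h assume h: "h \<in> set ys"
        have hx: "h \<in> set xs" "h \<noteq> \<sigma> x" using h sys by auto
        have P: "\<sigma> h \<in> set hs" "\<sigma> (\<sigma> h) = h" "f (\<sigma> h) = f h" "f h \<in> A" "\<sigma> h = h \<longrightarrow> f h = \<one>"
          using less.prems(2)[of h] hx Cons by auto
        have "\<sigma> h \<noteq> x" using P(2) hx by metis
        moreover have "\<sigma> h \<noteq> \<sigma> x" using P(2) Px(2) hx dx by metis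
        ultimately show "\<sigma> h \<in> set ys \<and> \<sigma> (\<sigma> h) = h \<and> f (\<sigma> h) = f h \<and> f h \<in> A \<and> (\<sigma> h = h \<longrightarrow> f h = \<one>)"
          using P Cons sys by auto
      qed
      moreover have "lprod f xs = f (\<sigma> x) \<otimes> lprod f ys"
        unfolding ys_def by (rule lprod_remove1[OF sx xsA])
      ultimately show ?thesis using Cons Px by simp
    qed
  qed
qed

lemma bprod_self: assumes r: "rv r" shows "bprod r r m = \<one>"
  unfolding bprod_def
proof (rule lprod_pair[where \<sigma> = "\<lambda>h. m - h"])
  show "distinct [1..<m]" by simp
  fix h assume h: "h \<in> set [1..<m]"
  then have e: "m - (m - h) = h" by auto
  show "m - h \<in> set [1..<m] \<and> m - (m - h) = h \<and> cm (r (m - h)) (r (m - (m - h))) = cm (r h) (r (m - h)) \<and>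
        cm (r h) (r (m - h)) \<in> A \<and> (m - h = h \<longrightarrow> cm (r h) (r (m - h)) = \<one>)"
  proof -
    have c: "r h \<in> carrier G" "r (m - h) \<in> carrier G" using r by auto
    have c1: "cm (r (m - h)) (r h) = cm (r h) (r (m - h))" by (rule cm_flip[OF c(2,1)])
    have c2: "cm (r h) (r (m - h)) \<in> A" using c by simp
    have c3: "m - h = h \<longrightarrow> cm (r h) (r (m - h)) = \<one>" using c by (simp add: commutator_def gsimp)
    show ?thesis using h e c1 c2 c3 by auto
  qed
qed

lemma br_self: "x \<in> carrier L \<Longrightarrow> x \<otimes>\<^bsub>L\<^esub> x = \<zero>\<^bsub>L\<^esub>"
proof (elim carrier_felE)
  fix r assume r: "rv r" "x = fel r"
  have "bprod r r = (\<lambda>_. \<one>)" using bprod_self[OF r(1)] by auto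
  then show ?thesis using r by (simp add: br_fel zero_fel')
qed

lemma br_zero_r: "x \<in> carrier L \<Longrightarrow> x \<otimes>\<^bsub>L\<^esub> \<zero>\<^bsub>L\<^esub> = \<zero>\<^bsub>L\<^esub>"
proof (elim carrier_felE)
  fix r assume r: "rv r" "x = fel r"
  have "bprod r (\<lambda>_. \<one>) = (\<lambda>_. \<one>)" using r by (auto simp: bprod_def intro!: lprod_ones)
  then show ?thesis using r by (simp add: br_fel zero_fel')
qed

lemma br_zero_l: "x \<in> carrier L \<Longrightarrow> \<zero>\<^bsub>L\<^esub> \<otimes>\<^bsub>L\<^esub> x = \<zero>\<^bsub>L\<^esub>"
proof (elim carrier_felE)
  fix r assume r: "rv r" "x = fel r"
  have "bprod (\<lambda>_. \<one>) r = (\<lambda>_. \<one>)" using r by (auto simp: bprod_def intro!: lprod_ones)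
  then show ?thesis using r by (simp add: br_fel zero_fel')
qed

lemma add_self: "x \<in> carrier L \<Longrightarrow> x \<oplus>\<^bsub>L\<^esub> x = \<zero>\<^bsub>L\<^esub>"
proof (elim carrier_felE)
  fix r assume r: "rv r" "x = fel r"
  have "fel (\<lambda>k. r k \<otimes> r k) = fel (\<lambda>_. \<one>)"
  proof (rule fel_eqI)
    show "rv (\<lambda>k. r k \<otimes> r k)" using r rv_mult by auto
    show "rv (\<lambda>_. \<one>)" by simp
    fix k :: nat assume "1 \<le> k"
    show "lcs G k #> (r k \<otimes> r k) = lcs G k #> \<one>"
      using rcos_mem[OF sq_lcs[OF \<open>1 \<le> k\<close> rv_closed[OF r(1)]]] rcos_one by simp
  qed
  then show ?thesis using r by (simp add: add_fel zero_fel')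
qed

lemma neg_self: "x \<in> carrier L \<Longrightarrow> \<ominus>\<^bsub>L\<^esub> x = x"
  using La.minus_equality add_self by blast

lemma eq_of_add_zero: "x \<in> carrier L \<Longrightarrow> y \<in> carrier L \<Longrightarrow> x \<oplus>\<^bsub>L\<^esub> y = \<zero>\<^bsub>L\<^esub> \<Longrightarrow> x = y"
  using La.minus_equality neg_self by metis

lemma br_anti: assumes x: "x \<in> carrier L" and y: "y \<in> carrier L"
  shows "y \<otimes>\<^bsub>L\<^esub> x = x \<otimes>\<^bsub>L\<^esub> y"
proof -
  have "\<zero>\<^bsub>L\<^esub> = (x \<oplus>\<^bsub>L\<^esub> y) \<otimes>\<^bsub>L\<^esub> (x \<oplus>\<^bsub>L\<^esub> y)" using br_self x y by simp
  also have "\<dots> = x \<otimes>\<^bsub>L\<^esub> x \<oplus>\<^bsub>L\<^esub> y \<otimes>\<^bsub>L\<^esub> x \<oplus>\<^bsub>L\<^esub> (x \<otimes>\<^bsub>L\<^esub> y \<oplus>\<^bsub>L\<^esub> y \<otimes>\<^bsub>L\<^esub> y)"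
    using x y by (simp add: br_add_l br_add_r br_closed)
  also have "\<dots> = y \<otimes>\<^bsub>L\<^esub> x \<oplus>\<^bsub>L\<^esub> x \<otimes>\<^bsub>L\<^esub> y"
    using x y by (simp add: br_self br_closed)
  finally show ?thesis using eq_of_add_zero x y br_closed by metis
qed

subsection \<open>Homogeneous elements\<close>

definition dl :: "nat \<Rightarrow> 'g \<Rightarrow> nat \<Rightarrow> 'g" where "dl m a = (\<lambda>k. if k = m then a else \<one>)"
definition hel :: "nat \<Rightarrow> 'g \<Rightarrow> nat \<Rightarrow> 'g set" where "hel m a = fel (dl m a)"

lemma rv_dl: "a \<in> lcs G (m - 1) \<Longrightarrow> rv (dl m a)"
  unfolding rv_def dl_def by (intro conjI allI exI[of _ m]) auto

lemma hel_carrier: "a \<in> lcs G (m - 1) \<Longrightarrow> hel m a \<in> carrier L"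
  by (simp add: hel_def fel_carrier rv_dl)

lemma dl_carrier [simp]: "a \<in> carrier G \<Longrightarrow> dl m a k \<in> carrier G"
  by (simp add: dl_def)

lemma bprod_dl: assumes "1 \<le> h" "1 \<le> k" "a \<in> carrier G" "b \<in> carrier G"
  shows "bprod (dl h a) (dl k b) = dl (h + k) (cm a b)"
proof
  fix m
  have "bprod (dl h a) (dl k b) m = (if h \<in> set [1..<m] then cm (dl h a h) (dl k b (m - h)) else \<one>)"
    unfolding bprod_def using assms by (intro lprod_single) (auto simp: dl_def)
  then show "bprod (dl h a) (dl k b) m = dl (h + k) (cm a b) m"
    using assms by (auto simp: dl_def)
qed

lemma br_hel: assumes "1 \<le> h" "1 \<le> k" "a \<in> lcs G (h - 1)" "b \<in> lcs G (k - 1)"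
  shows "hel h a \<otimes>\<^bsub>L\<^esub> hel k b = hel (h + k) (cm a b)"
  using assms by (simp add: hel_def br_fel rv_dl bprod_dl)

lemma hel_add: "a \<in> lcs G (m - 1) \<Longrightarrow> b \<in> lcs G (m - 1) \<Longrightarrow> hel m a \<oplus>\<^bsub>L\<^esub> hel m b = hel m (a \<otimes> b)"
proof -
  assume ab: "a \<in> lcs G (m - 1)" "b \<in> lcs G (m - 1)"
  have "(\<lambda>k. dl m a k \<otimes> dl m b k) = dl m (a \<otimes> b)" by (auto simp: dl_def)
  then show ?thesis using ab by (simp add: hel_def add_fel rv_dl)
qed

lemma hel_one: "hel m \<one> = \<zero>\<^bsub>L\<^esub>"
proof -
  have "dl m \<one> = (\<lambda>_. \<one>)" by (auto simp: dl_def)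
  then show ?thesis by (simp add: hel_def zero_fel')
qed

lemma hel_triv: "a \<in> lcs G m \<Longrightarrow> hel m a = \<zero>\<^bsub>L\<^esub>"
  unfolding hel_def zero_fel' by (rule fel_eq) (auto simp: dl_def rcos_mem rcos_one)

subsection \<open>The map L(phi)\<close>

abbreviation \<psi> where "\<psi> \<equiv> Lphi G \<phi>"

lemma phi_one [simp]: "\<phi> \<one> = {}"
  using inA[of \<one>] by simp

lemma Lphi_fel: assumes r: "rv r" shows "\<psi> (fel r) = \<phi> (r 1)"
proof -
  have r1: "r 1 \<in> carrier G" using r by simp
  have ex: "\<exists>x. x \<in> fel r 1" using rcos_self[OF r1 lcs_subgroup[of 1]] by (auto simp: fel_def)
  obtain t where t: "t \<in> lcs G 1" "(SOME x. x \<in> fel r 1) = t \<otimes> r 1"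
    using someI_ex[OF ex] unfolding fel_def r_coset_def by blast
  have "t \<in> carrier G" "\<phi> t = {}" using t(1) inA by (auto simp: A_lcs1)
  then show ?thesis using t r1 by (simp add: Lphi_def phi_mult)
qed

definition kv :: "(nat \<Rightarrow> 'g) \<Rightarrow> bool" where "kv t \<longleftrightarrow> rv t \<and> t 0 = \<one> \<and> t 1 = \<one>"

lemma kv_A: assumes "kv t" shows "t k \<in> A"
proof (cases "k \<ge> 2")
  case True then show ?thesis using assms lcs_A[of "k - 1" "t k"] by (simp add: kv_def rv_def)
next
  case False then have "k = 0 \<or> k = 1" by auto
  then show ?thesis using assms by (auto simp: kv_def)
qed

lemma kv_rv: "kv t \<Longrightarrow> rv t" by (simp add: kv_def)

lemma kv_ker: "kv t \<Longrightarrow> \<psi> (fel t) = {}"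
  by (simp add: Lphi_fel kv_def)

lemma decomp: assumes x: "x \<in> carrier L"
  shows "\<exists>a t. a \<in> carrier G \<and> kv t \<and> x = hel 1 a \<oplus>\<^bsub>L\<^esub> fel t \<and> \<psi> x = \<phi> a"
proof -
  obtain r where r: "rv r" "x = fel r" using carrier_fel[OF x] by blast
  define t where "t = (\<lambda>k. if k \<le> 1 then \<one> else r k)"
  have kvt: "kv t" using r(1) unfolding kv_def rv_def t_def
    by (auto intro: exI[of _ 0])
  have a: "r 1 \<in> lcs G (1 - 1)" using rv_closed[OF r(1)] by blast
  have "hel 1 (r 1) \<oplus>\<^bsub>L\<^esub> fel t = fel (\<lambda>k. dl 1 (r 1) k \<otimes> t k)"
    using a kvt by (simp add: hel_def add_fel rv_dl kv_def)
  also have "\<dots> = fel r"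
  proof (rule fel_eqI)
    show "rv (\<lambda>k. dl 1 (r 1) k \<otimes> t k)" using a kvt rv_mult rv_dl kv_rv by blast
    show "rv r" by (rule r(1))
    fix k :: nat assume "1 \<le> k"
    then show "lcs G k #> (dl 1 (r 1) k \<otimes> t k) = lcs G k #> r k"
      using r(1) by (auto simp: dl_def t_def)
  qed
  finally show ?thesis using r kvt by (intro exI[of _ "r 1"] exI[of _ t]) (simp add: Lphi_fel)
qed

lemma ker_fel: assumes x: "x \<in> carrier L" and k: "\<psi> x = {}" shows "\<exists>t. kv t \<and> x = fel t"
proof -
  obtain a t where at: "a \<in> carrier G" "kv t" "x = hel 1 a \<oplus>\<^bsub>L\<^esub> fel t" "\<psi> x = \<phi> a"
    using decomp[OF x] by blast
  have "a \<in> lcs G 1" using at k inA by (simp add: A_lcs1)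
  then have "hel 1 a = \<zero>\<^bsub>L\<^esub>" by (rule hel_triv)
  then have "x = fel t" using at fel_carrier kv_rv by simp
  then show ?thesis using at by blast
qed

lemma br_ker: "x \<in> carrier L \<Longrightarrow> y \<in> carrier L \<Longrightarrow> \<psi> (x \<otimes>\<^bsub>L\<^esub> y) = {}"
  by (elim carrier_felE) (simp add: br_fel Lphi_fel rv_bprod bprod_def)

lemma br_kv: assumes "kv t" "kv t'" shows "fel t \<otimes>\<^bsub>L\<^esub> fel t' = \<zero>\<^bsub>L\<^esub>"
proof -
  have "bprod t t' = (\<lambda>_. \<one>)"
    using assms by (auto simp: bprod_def kv_A cm_AA intro!: lprod_ones)
  then show ?thesis using assms by (simp add: br_fel kv_rv zero_fel')
qed

definition Tsh :: "'g \<Rightarrow> (nat \<Rightarrow> 'g) \<Rightarrow> nat \<Rightarrow> 'g" where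
  "Tsh a t = (\<lambda>m. if 2 \<le> m then cm a (t (m - 1)) else \<one>)"

lemma kv_Tsh: assumes a: "a \<in> carrier G" and t: "kv t" shows "kv (Tsh a t)"
proof -
  obtain B where B: "\<forall>k>B. t k = \<one>" using t by (auto simp: kv_def rv_def)
  have "Tsh a t m \<in> lcs G (m - 1)" for m
  proof (cases "2 \<le> m")
    case True
    then obtain j where j: "m = j + 2" by (metis add.commute le_Suc_ex)
    have "cm a (t (m - 1)) \<in> lcs G (Suc (m - 1 - 1))"
      using cm_lcs[OF a rv_closed[OF kv_rv[OF t], of "m - 1"]] .
    then show ?thesis using True j by (simp add: Tsh_def)
  next
    case False then show ?thesis by (simp add: Tsh_def)
  qed
  moreover have "\<forall>k>B + 1. Tsh a t k = \<one>" using B a by (simp add: Tsh_def)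
  ultimately show ?thesis by (auto simp: kv_def rv_def Tsh_def)
qed

lemma br_hel1_kv: assumes a: "a \<in> carrier G" and t: "kv t"
  shows "hel 1 a \<otimes>\<^bsub>L\<^esub> fel t = fel (Tsh a t)"
proof -
  have "bprod (dl 1 a) t = Tsh a t"
  proof
    fix m
    have "bprod (dl 1 a) t m = (if 1 \<in> set [1..<m] then cm (dl 1 a 1) (t (m - 1)) else \<one>)"
      unfolding bprod_def using a t kv_rv[OF t] by (intro lprod_single) (auto simp: dl_def)
    then show "bprod (dl 1 a) t m = Tsh a t m" by (auto simp: Tsh_def dl_def)
  qed
  then show ?thesis using a t by (simp add: hel_def br_fel rv_dl kv_rv)
qed

end


context expgrp
begin

definition Jac where
  "Jac x y z = x \<otimes>\<^bsub>L\<^esub> (y \<otimes>\<^bsub>L\<^esub> z) \<oplus>\<^bsub>L\<^esub> y \<otimes>\<^bsub>L\<^esub> (z \<otimes>\<^bsub>L\<^esub> x) \<oplus>\<^bsub>L\<^esub> z \<otimes>\<^bsub>L\<^esub> (x \<otimes>\<^bsub>L\<^esub> y)"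

lemma J_cyc: "x \<in> carrier L \<Longrightarrow> y \<in> carrier L \<Longrightarrow> z \<in> carrier L \<Longrightarrow> Jac x y z = Jac y z x"
  unfolding Jac_def by (simp add: br_closed La.a_ac)

lemma J_add1: assumes "x1 \<in> carrier L" "x2 \<in> carrier L" "y \<in> carrier L" "z \<in> carrier L"
  shows "Jac (x1 \<oplus>\<^bsub>L\<^esub> x2) y z = Jac x1 y z \<oplus>\<^bsub>L\<^esub> Jac x2 y z"
  unfolding Jac_def using assms by (simp add: br_add_l br_add_r br_closed La.a_ac)

lemma hel1_carrier: "a \<in> carrier G \<Longrightarrow> hel 1 a \<in> carrier L"
  using hel_carrier[of a 1] by simp

definition Bs where "Bs x \<longleftrightarrow> (\<exists>a\<in>carrier G. x = hel 1 a) \<or> (\<exists>t. kv t \<and> x = fel t)"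

lemma Bs_carrier: "Bs x \<Longrightarrow> x \<in> carrier L"
  unfolding Bs_def using hel1_carrier fel_carrier kv_rv by blast

lemma J111: assumes a: "a \<in> carrier G" "b \<in> carrier G" "d \<in> carrier G"
  shows "Jac (hel 1 a) (hel 1 b) (hel 1 d) = \<zero>\<^bsub>L\<^esub>"
proof -
  have h2: "hel 1 x \<otimes>\<^bsub>L\<^esub> hel 1 y = hel 2 (cm x y)" if "x \<in> carrier G" "y \<in> carrier G" for x y
  proof -
    have "hel 1 x \<otimes>\<^bsub>L\<^esub> hel 1 y = hel (1 + 1) (cm x y)" by (rule br_hel) (use that in simp_all)
    then show ?thesis unfolding one_add_one .
  qed
  have h3: "hel 1 x \<otimes>\<^bsub>L\<^esub> hel 2 u = hel 3 (cm x u)" if "x \<in> carrier G" "u \<in> lcs G 1" for x u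
  proof -
    have "hel 1 x \<otimes>\<^bsub>L\<^esub> hel 2 u = hel (1 + 2) (cm x u)" by (rule br_hel) (use that in simp_all)
    moreover have "(1::nat) + 2 = 3" by simp
    ultimately show ?thesis by (simp only:)
  qed
  have c1: "\<And>x y. x \<in> carrier G \<Longrightarrow> y \<in> carrier G \<Longrightarrow> cm x y \<in> lcs G 1"
    using cm_lcs[of _ _ 0] by simp
  have c2: "\<And>x u. x \<in> carrier G \<Longrightarrow> u \<in> lcs G 1 \<Longrightarrow> cm x u \<in> lcs G (3 - 1)"
    using cm_lcs[of _ _ 1] by (simp add: numeral_2_eq_2)
  have "Jac (hel 1 a) (hel 1 b) (hel 1 d) =
        hel 3 (cm a (cm b d)) \<oplus>\<^bsub>L\<^esub> hel 3 (cm b (cm d a)) \<oplus>\<^bsub>L\<^esub> hel 3 (cm d (cm a b))"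
    unfolding Jac_def h2[OF a(2) a(3)] h2[OF a(3) a(1)] h2[OF a(1) a(2)]
      h3[OF a(1) c1[OF a(2,3)]] h3[OF a(2) c1[OF a(3,1)]] h3[OF a(3) c1[OF a(1,2)]] ..
  also have "\<dots> = hel 3 (cm a (cm b d) \<otimes> cm b (cm d a) \<otimes> cm d (cm a b))"
    using a c1 c2 by (simp add: hel_add)
  also have "\<dots> = \<zero>\<^bsub>L\<^esub>" using GI8[OF a] hel_one by simp
  finally show ?thesis .
qed

lemma Tsh_comm: assumes "a \<in> carrier G" "b \<in> carrier G" "kv t"
  shows "Tsh a (Tsh b t) = Tsh b (Tsh a t)"
proof
  fix m
  show "Tsh a (Tsh b t) m = Tsh b (Tsh a t) m"
    using assms GI6[OF assms(1,2) kv_A[OF assms(3), of "m - 1 - 1"]] by (simp add: Tsh_def)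
qed

lemma J11K: assumes a: "a \<in> carrier G" "b \<in> carrier G" and t: "kv t"
  shows "Jac (hel 1 a) (hel 1 b) (fel t) = \<zero>\<^bsub>L\<^esub>"
proof -
  have ha: "hel 1 a \<in> carrier L" "hel 1 b \<in> carrier L" using a hel1_carrier by auto
  have ft: "fel t \<in> carrier L" using t fel_carrier kv_rv by blast
  have 1: "hel 1 a \<otimes>\<^bsub>L\<^esub> (hel 1 b \<otimes>\<^bsub>L\<^esub> fel t) = fel (Tsh a (Tsh b t))"
    unfolding br_hel1_kv[OF a(2) t] by (rule br_hel1_kv[OF a(1) kv_Tsh[OF a(2) t]])
  have "fel t \<otimes>\<^bsub>L\<^esub> hel 1 a = hel 1 a \<otimes>\<^bsub>L\<^esub> fel t" using br_anti ha ft by blast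
  then have e1: "fel t \<otimes>\<^bsub>L\<^esub> hel 1 a = fel (Tsh a t)" using br_hel1_kv[OF a(1) t] by (simp only:)
  have 2: "hel 1 b \<otimes>\<^bsub>L\<^esub> (fel t \<otimes>\<^bsub>L\<^esub> hel 1 a) = fel (Tsh a (Tsh b t))"
    by (simp only: e1 br_hel1_kv[OF a(2) kv_Tsh[OF a(1) t]] Tsh_comm[OF a t])
  obtain t' where t': "kv t'" "hel 1 a \<otimes>\<^bsub>L\<^esub> hel 1 b = fel t'"
    using ker_fel[OF br_closed[OF ha] br_ker[OF ha]] by blast
  have 3: "fel t \<otimes>\<^bsub>L\<^esub> (hel 1 a \<otimes>\<^bsub>L\<^esub> hel 1 b) = \<zero>\<^bsub>L\<^esub>" using t' t br_kv by simp
  have c: "fel (Tsh a (Tsh b t)) \<in> carrier L" using a t kv_Tsh fel_carrier kv_rv by blast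
  show ?thesis unfolding Jac_def 1 2 3 using c add_self by simp
qed

definition Ks where "Ks = {fel t | t. kv t}"

lemma term0: assumes "u \<in> carrier L" "v \<in> carrier L" "w \<in> carrier L" "u \<in> Ks \<or> (v \<in> Ks \<and> w \<in> Ks)"
  shows "u \<otimes>\<^bsub>L\<^esub> (v \<otimes>\<^bsub>L\<^esub> w) = \<zero>\<^bsub>L\<^esub>"
proof (cases "u \<in> Ks")
  case True
  then obtain t where t: "kv t" "u = fel t" by (auto simp: Ks_def)
  obtain t' where t': "kv t'" "v \<otimes>\<^bsub>L\<^esub> w = fel t'"
    using ker_fel[OF br_closed br_ker] assms by blast
  show ?thesis using t t' br_kv by simp
next
  case False
  then obtain t t' where t: "kv t" "v = fel t" "kv t'" "w = fel t'" using assms(4) by (auto simp: Ks_def)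
  then show ?thesis using br_kv br_zero_r assms(1) by simp
qed

lemma J_KK: assumes "x \<in> carrier L" "y \<in> carrier L" "z \<in> carrier L"
  and "(x \<in> Ks \<and> y \<in> Ks) \<or> (x \<in> Ks \<and> z \<in> Ks) \<or> (y \<in> Ks \<and> z \<in> Ks)"
  shows "Jac x y z = \<zero>\<^bsub>L\<^esub>"
proof -
  have "x \<otimes>\<^bsub>L\<^esub> (y \<otimes>\<^bsub>L\<^esub> z) = \<zero>\<^bsub>L\<^esub>" "y \<otimes>\<^bsub>L\<^esub> (z \<otimes>\<^bsub>L\<^esub> x) = \<zero>\<^bsub>L\<^esub>" "z \<otimes>\<^bsub>L\<^esub> (x \<otimes>\<^bsub>L\<^esub> y) = \<zero>\<^bsub>L\<^esub>"
    using assms by (auto intro!: term0)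
  then show ?thesis unfolding Jac_def by simp
qed

lemma J_base: assumes "Bs x" "Bs y" "Bs z" shows "Jac x y z = \<zero>\<^bsub>L\<^esub>"
proof -
  have c: "x \<in> carrier L" "y \<in> carrier L" "z \<in> carrier L" using assms Bs_carrier by auto
  have B: "\<And>u. Bs u \<Longrightarrow> (\<exists>a\<in>carrier G. u = hel 1 a) \<or> u \<in> Ks" unfolding Bs_def Ks_def by blast
  show ?thesis
  proof (cases "x \<in> Ks")
    case xK: True
    show ?thesis
    proof (cases "y \<in> Ks \<or> z \<in> Ks")
      case True then show ?thesis using xK c J_KK by blast
    next
      case False
      then obtain b d where "b \<in> carrier G" "d \<in> carrier G" "y = hel 1 b" "z = hel 1 d" using B assms by blast
      moreover obtain t where "kv t" "x = fel t" using xK by (auto simp: Ks_def)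
      ultimately show ?thesis using J11K J_cyc c by metis
    qed
  next
    case xH: False
    then obtain a where a: "a \<in> carrier G" "x = hel 1 a" using B assms by blast
    show ?thesis
    proof (cases "y \<in> Ks \<and> z \<in> Ks")
      case True then show ?thesis using c J_KK by blast
    next
      case False
      then consider "y \<notin> Ks" "z \<notin> Ks" | "y \<in> Ks" "z \<notin> Ks" | "y \<notin> Ks" "z \<in> Ks" by blast
      then show ?thesis
      proof cases
        case 1
        then obtain b d where "b \<in> carrier G" "d \<in> carrier G" "y = hel 1 b" "z = hel 1 d" using B assms by blast
        then show ?thesis using J111 a by simp
      next
        case 2
        then obtain d where d: "d \<in> carrier G" "z = hel 1 d" using B assms by blast
        obtain t where t: "kv t" "y = fel t" using 2 by (auto simp: Ks_def)
        have "Jac x y z = Jac z x y" using J_cyc c by metis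
        then show ?thesis using J11K[OF d(1) a(1) t(1)] a d t by simp
      next
        case 3
        then obtain b where b: "b \<in> carrier G" "y = hel 1 b" using B assms by blast
        obtain t where t: "kv t" "z = fel t" using 3 by (auto simp: Ks_def)
        then show ?thesis using J11K[OF a(1) b(1) t(1)] a b by simp
      qed
    qed
  qed
qed

lemma J_red: assumes x: "x \<in> carrier L" and y: "y \<in> carrier L" and z: "z \<in> carrier L"
  and H: "\<And>x'. Bs x' \<Longrightarrow> Jac x' y z = \<zero>\<^bsub>L\<^esub>"
  shows "Jac x y z = \<zero>\<^bsub>L\<^esub>"
proof -
  obtain a t where at: "a \<in> carrier G" "kv t" "x = hel 1 a \<oplus>\<^bsub>L\<^esub> fel t" using decomp[OF x] by blast
  have B: "Bs (hel 1 a)" "Bs (fel t)" using at unfolding Bs_def by blast+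
  show ?thesis using J_add1[OF Bs_carrier[OF B(1)] Bs_carrier[OF B(2)] y z] H[OF B(1)] H[OF B(2)] at by simp
qed

lemma jacobi: assumes "x \<in> carrier L" "y \<in> carrier L" "z \<in> carrier L" shows "Jac x y z = \<zero>\<^bsub>L\<^esub>"
proof (rule J_red[OF assms])
  fix x' assume x': "Bs x'"
  have "Jac y z x' = \<zero>\<^bsub>L\<^esub>"
  proof (rule J_red[OF assms(2,3) Bs_carrier[OF x']])
    fix y' assume y': "Bs y'"
    have "Jac z x' y' = \<zero>\<^bsub>L\<^esub>"
    proof (rule J_red[OF assms(3) Bs_carrier[OF x'] Bs_carrier[OF y']])
      fix z' assume "Bs z'" then show "Jac z' x' y' = \<zero>\<^bsub>L\<^esub>" using J_base x' y' by blast
    qed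
    then show "Jac y' z x' = \<zero>\<^bsub>L\<^esub>" using J_cyc assms Bs_carrier x' y' by metis
  qed
  then show "Jac x' y z = \<zero>\<^bsub>L\<^esub>" using J_cyc assms Bs_carrier x' by metis
qed

end


context expgrp
begin

lemma sub_add: assumes "H \<subseteq> carrier L" "H \<noteq> {}" "\<And>a b. a \<in> H \<Longrightarrow> b \<in> H \<Longrightarrow> a \<oplus>\<^bsub>L\<^esub> b \<in> H"
  shows "subgroup H (add_monoid L)"
proof -
  have inv: "inv\<^bsub>add_monoid L\<^esub> a = a" if a: "a \<in> H" for a
  proof -
    have "inv\<^bsub>add_monoid L\<^esub> a = \<ominus>\<^bsub>L\<^esub> a" by (simp add: a_inv_def)
    also have "\<dots> = a" using neg_self a assms(1) by blast
    finally show ?thesis .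
  qed
  have Hc: "\<And>a. a \<in> H \<Longrightarrow> a \<in> carrier L" using assms(1) by blast
  show ?thesis by (rule La.add.subgroupI) (use assms inv Hc in \<open>auto simp: neg_self\<close>)
qed

lemma comp_iff: "x \<in> LG_comp G m \<longleftrightarrow> x \<in> carrier L \<and> (\<forall>k. k \<noteq> m \<longrightarrow> x k = lcs G k)"
  by (simp add: LG_comp_def L_simps)

lemma zero_fun: "\<zero>\<^bsub>L\<^esub> = (\<lambda>k. lcs G k)"
  by (simp add: zero_fel' fel_def rcos_one)

lemma hel_comp: "a \<in> lcs G (m - 1) \<Longrightarrow> hel m a \<in> LG_comp G m"
  by (simp add: comp_iff hel_carrier) (simp add: hel_def fel_def dl_def rcos_one)

lemma comp_hel: assumes "x \<in> LG_comp G m" shows "\<exists>a. a \<in> lcs G (m - 1) \<and> x = hel m a"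
proof -
  have x: "x \<in> carrier L" "\<And>k. k \<noteq> m \<Longrightarrow> x k = lcs G k" using assms comp_iff by auto
  obtain r where r: "rv r" "x = fel r" using carrier_fel[OF x(1)] by blast
  have "x = hel m (r m)"
    unfolding hel_def r(2) by (rule fel_eq) (use x r in \<open>auto simp: dl_def rcos_one fel_def\<close>)
  then show ?thesis using rv_closed[OF r(1)] by blast
qed

lemma comp0: "LG_comp G 0 = {\<zero>\<^bsub>L\<^esub>}"
proof
  show "LG_comp G 0 \<subseteq> {\<zero>\<^bsub>L\<^esub>}"
  proof
    fix x assume "x \<in> LG_comp G 0"
    then obtain a where "a \<in> lcs G (0 - 1)" "x = hel 0 a" using comp_hel by blast
    then have "x = \<zero>\<^bsub>L\<^esub>" using hel_triv by simp
    then show "x \<in> {\<zero>\<^bsub>L\<^esub>}" by simp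
  qed
  show "{\<zero>\<^bsub>L\<^esub>} \<subseteq> LG_comp G 0" using hel_comp[of \<one> 0] hel_one by simp
qed

lemma zero_comp: "\<zero>\<^bsub>L\<^esub> \<in> LG_comp G m"
  using hel_comp[of \<one> m] hel_one by simp

lemma comp_carrier: "x \<in> LG_comp G m \<Longrightarrow> x \<in> carrier L"
  by (simp add: comp_iff)

lemma comp_subgroup: "subgroup (LG_comp G m) (add_monoid L)"
proof (rule sub_add)
  show "LG_comp G m \<subseteq> carrier L" using comp_carrier by blast
  show "LG_comp G m \<noteq> {}" using zero_comp by blast
  fix a b assume ab: "a \<in> LG_comp G m" "b \<in> LG_comp G m"
  obtain x where "x \<in> lcs G (m - 1)" "a = hel m x" using comp_hel[OF ab(1)] by blast
  moreover obtain y where "y \<in> lcs G (m - 1)" "b = hel m y" using comp_hel[OF ab(2)] by blast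
  ultimately show "a \<oplus>\<^bsub>L\<^esub> b \<in> LG_comp G m" by (simp add: hel_add hel_comp)
qed

lemma comp_br: assumes "x \<in> LG_comp G h" "y \<in> LG_comp G k" shows "x \<otimes>\<^bsub>L\<^esub> y \<in> LG_comp G (h + k)"
proof (cases "h = 0 \<or> k = 0")
  case True
  then show ?thesis
  proof
    assume "h = 0" then have "x = \<zero>\<^bsub>L\<^esub>" using assms comp0 by auto
    then show ?thesis using br_zero_l comp_carrier assms zero_comp by simp
  next
    assume "k = 0" then have "y = \<zero>\<^bsub>L\<^esub>" using assms comp0 by auto
    then show ?thesis using br_zero_r comp_carrier assms zero_comp by simp
  qed
next
  case False
  obtain a where a: "a \<in> lcs G (h - 1)" "x = hel h a" using comp_hel[OF assms(1)] by blast
  obtain b where b: "b \<in> lcs G (k - 1)" "y = hel k b" using comp_hel[OF assms(2)] by blast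
  note ab = a b
  have X: "cm a b \<in> lcs G (h - 1 + (k - 1) + 1)" using comm_deg ab by blast
  have e: "h - 1 + (k - 1) + 1 = h + k - 1" using False by arith
  have "cm a b \<in> lcs G (h + k - 1)" using X unfolding e .
  then show ?thesis using ab False br_hel[of h k a b] hel_comp by simp
qed

subsection \<open>Unique decomposition\<close>

lemma carrier_absorb: assumes "f \<in> carrier L"
  shows "lcs G k <#> f k = f k" "f k <#> lcs G k = f k"
proof -
  obtain r where r: "rv r" "f = fel r" using carrier_fel[OF assms] by blast
  show "lcs G k <#> f k = f k" "f k <#> lcs G k = f k"
    using rcos_mult[of \<one> "r k" k] rcos_mult[of "r k" \<one> k] r by (simp_all add: fel_def rcos_one)
qed

lemma finsum_eval: assumes c: "\<And>m. c m \<in> LG_comp G m" and S: "finite S"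
  shows "finsum L c S k = (if k \<in> S then c k k else lcs G k)"
  using S
proof (induction S rule: finite_induct)
  case empty then show ?case by (simp add: zero_fun)
next
  case (insert a S)
  have ca: "\<And>m. c m \<in> carrier L" using c comp_carrier by blast
  have F: "finsum L c S \<in> carrier L" using ca by (simp add: Pi_def)
  have "finsum L c (insert a S) = c a \<oplus>\<^bsub>L\<^esub> finsum L c S"
    using insert ca by (simp add: Pi_def)
  then have e: "finsum L c (insert a S) k = c a k <#> finsum L c S k"
    by (simp add: L_simps LG_add_def)
  show ?case
  proof (cases "k = a")
    case True
    then show ?thesis using e insert carrier_absorb(2)[OF ca] by simp
  next
    case False
    then have "c a k = lcs G k" using c comp_iff by blast
    then have "finsum L c (insert a S) k = finsum L c S k" using e carrier_absorb(1)[OF F, of k] by simp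
    then show ?thesis using insert.IH False by simp
  qed
qed

definition proj where "proj m x = (\<lambda>k. if k = m then x k else lcs G k)"

lemma proj_comp: assumes x: "x \<in> carrier L" shows "proj m x \<in> LG_comp G m"
proof -
  obtain r where r: "rv r" "x = fel r" using carrier_fel[OF x] by blast
  have "proj m x = hel m (r m)"
    by (rule ext) (auto simp: proj_def hel_def fel_def dl_def r rcos_one)
  then show ?thesis using hel_comp rv_closed[OF r(1)] by simp
qed

lemma comp_is_proj: assumes c: "\<And>m. c m \<in> LG_comp G m" and S: "finite {m. c m \<noteq> \<zero>\<^bsub>L\<^esub>}"
  and x: "x = finsum L c {m. c m \<noteq> \<zero>\<^bsub>L\<^esub>}"
  shows "c m = proj m x"
proof
  fix k
  have xe: "x k = (if k \<in> {m. c m \<noteq> \<zero>\<^bsub>L\<^esub>} then c k k else lcs G k)" for k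
    using finsum_eval[OF c S] x by simp
  show "c m k = proj m x k"
  proof (cases "c m = \<zero>\<^bsub>L\<^esub>")
    case True
    then show ?thesis using xe[of m] by (simp add: proj_def zero_fun)
  next
    case False
    then show ?thesis using xe[of m] c[of m] comp_iff by (auto simp: proj_def)
  qed
qed

lemma decomp_unique: assumes x: "x \<in> carrier L"
  shows "\<exists>!c. (\<forall>m. c m \<in> LG_comp G m) \<and> finite {m. c m \<noteq> \<zero>\<^bsub>L\<^esub>} \<and>
          x = finsum L c {m. c m \<noteq> \<zero>\<^bsub>L\<^esub>}"
proof
  define c where "c m = proj m x" for m
  have cc: "\<And>m. c m \<in> LG_comp G m" using proj_comp[OF x] by (simp add: c_def)
  have sub: "{m. c m \<noteq> \<zero>\<^bsub>L\<^esub>} \<subseteq> {m. x m \<noteq> lcs G m}"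
  proof
    fix m assume m: "m \<in> {m. c m \<noteq> \<zero>\<^bsub>L\<^esub>}"
    show "m \<in> {m. x m \<noteq> lcs G m}"
    proof (rule ccontr)
      assume "m \<notin> {m. x m \<noteq> lcs G m}"
      then have "c m = (\<lambda>k. lcs G k)" by (intro ext) (auto simp: c_def proj_def)
      then have "c m = \<zero>\<^bsub>L\<^esub>" by (simp add: zero_fun)
      then show False using m by simp
    qed
  qed
  have "finite {m. x m \<noteq> lcs G m}" using x by (simp add: L_simps LG_carrier_def Gamma_def)
  then have fin: "finite {m. c m \<noteq> \<zero>\<^bsub>L\<^esub>}" using sub finite_subset by blast
  have "finsum L c {m. c m \<noteq> \<zero>\<^bsub>L\<^esub>} = x"
  proof
    fix k
    have e: "finsum L c {m. c m \<noteq> \<zero>\<^bsub>L\<^esub>} k = (if k \<in> {m. c m \<noteq> \<zero>\<^bsub>L\<^esub>} then c k k else lcs G k)"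
      by (rule finsum_eval[OF cc fin])
    have ck: "c k k = x k" by (simp add: c_def proj_def)
    show "finsum L c {m. c m \<noteq> \<zero>\<^bsub>L\<^esub>} k = x k"
    proof (cases "c k = \<zero>\<^bsub>L\<^esub>")
      case True
      then have "x k = lcs G k" using ck by (simp add: zero_fun)
      then show ?thesis using e True by simp
    next
      case False then show ?thesis using e ck by simp
    qed
  qed
  then show "(\<forall>m. c m \<in> LG_comp G m) \<and> finite {m. c m \<noteq> \<zero>\<^bsub>L\<^esub>} \<and> x = finsum L c {m. c m \<noteq> \<zero>\<^bsub>L\<^esub>}"
    using cc fin by simp
next
  fix c' assume "(\<forall>m. c' m \<in> LG_comp G m) \<and> finite {m. c' m \<noteq> \<zero>\<^bsub>L\<^esub>} \<and> x = finsum L c' {m. c' m \<noteq> \<zero>\<^bsub>L\<^esub>}"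
  then show "c' = (\<lambda>m. proj m x)" using comp_is_proj by blast
qed

end


context expgrp
begin

lemma psi_carrier: "x \<in> carrier L \<Longrightarrow> \<psi> x \<in> Pow {1..n}"
proof (elim carrier_felE)
  fix r assume r: "rv r" "x = fel r"
  have "\<phi> (r 1) \<subseteq> {1..n}" by (rule phi_closed) (use r in simp)
  then show ?thesis using r by (simp only: Lphi_fel Pow_iff)
qed

lemma psi_add: assumes "x \<in> carrier L" "y \<in> carrier L"
  shows "\<psi> (x \<oplus>\<^bsub>L\<^esub> y) = (\<psi> x - \<psi> y) \<union> (\<psi> y - \<psi> x)"
  using assms by (elim carrier_felE) (simp add: add_fel Lphi_fel rv_mult phi_mult)

lemma psi_comp: assumes "m \<noteq> 1" "x \<in> LG_comp G m" shows "\<psi> x = {}"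
proof -
  obtain a where a: "a \<in> lcs G (m - 1)" "x = hel m a" using comp_hel[OF assms(2)] by blast
  then have "\<psi> x = \<phi> (dl m a 1)" by (simp add: hel_def Lphi_fel[OF rv_dl[OF a(1)]])
  then show ?thesis using assms(1) by (simp add: dl_def)
qed

lemma psi_hel1: "a \<in> carrier G \<Longrightarrow> \<psi> (hel 1 a) = \<phi> a"
  using rv_dl[of a 1] by (simp add: hel_def Lphi_fel dl_def)

lemma exists_phi: "finite S \<Longrightarrow> S \<subseteq> {1..n} \<Longrightarrow> \<exists>x\<in>carrier G. \<phi> x = S"
proof (induction S rule: finite_induct)
  case empty then show ?case by (intro bexI[of _ \<one>]) simp_all
next
  case (insert i S)
  then obtain x where x: "x \<in> carrier G" "\<phi> x = S" by auto
  have g: "gg i \<in> carrier G" "\<phi> (gg i) = {i}" using gg_props insert.prems by auto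
  have "\<phi> (gg i \<otimes> x) = insert i S" using g x insert.hyps by (auto simp: phi_mult)
  then show ?case using g x by (intro bexI[of _ "gg i \<otimes> x"]) auto
qed

lemma psi_surj: "\<psi> ` carrier L = Pow {1..n}"
proof
  show "\<psi> ` carrier L \<subseteq> Pow {1..n}" using psi_carrier by blast
  show "Pow {1..n} \<subseteq> \<psi> ` carrier L"
  proof
    fix S assume "S \<in> Pow {1..n}"
    then have "finite S" "S \<subseteq> {1..n}" using finite_subset by auto
    then obtain x where "x \<in> carrier G" "\<phi> x = S" using exists_phi by blast
    then show "S \<in> \<psi> ` carrier L" using psi_hel1 hel1_carrier by (metis image_eqI)
  qed
qed

lemma psi_zero: "\<psi> \<zero>\<^bsub>L\<^esub> = {}"
  by (simp add: zero_fel' Lphi_fel)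

lemma ker_subgroup: "subgroup (lie_kernel L \<psi>) (add_monoid L)"
proof (rule sub_add)
  show "lie_kernel L \<psi> \<subseteq> carrier L" by (auto simp: lie_kernel_def)
  show "lie_kernel L \<psi> \<noteq> {}" using psi_zero by (auto simp: lie_kernel_def)
  fix a b assume "a \<in> lie_kernel L \<psi>" "b \<in> lie_kernel L \<psi>"
  then show "a \<oplus>\<^bsub>L\<^esub> b \<in> lie_kernel L \<psi>" by (auto simp: lie_kernel_def psi_add)
qed

lemma ker_br_zero: assumes "x \<in> lie_kernel L \<psi>" "y \<in> lie_kernel L \<psi>" shows "x \<otimes>\<^bsub>L\<^esub> y = \<zero>\<^bsub>L\<^esub>"
proof -
  obtain t where t: "kv t" "x = fel t" using ker_fel assms(1) by (auto simp: lie_kernel_def)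
  obtain t' where t': "kv t'" "y = fel t'" using ker_fel assms(2) by (auto simp: lie_kernel_def)
  show ?thesis using t t' br_kv by simp
qed

subsection \<open>The bracket span equals the kernel\<close>

definition Brs where "Brs = {x \<otimes>\<^bsub>L\<^esub> y | x y. x \<in> carrier L \<and> y \<in> carrier L}"

lemma zero_gen: "\<zero>\<^bsub>L\<^esub> \<in> generate (add_monoid L) Brs"
  using generate.one[of "add_monoid L" Brs] by simp

lemma hel_cong: "lcs G m #> a = lcs G m #> b \<Longrightarrow> hel m a = hel m b"
  unfolding hel_def by (rule fel_eq) (simp add: dl_def)

lemma hel_gen: assumes m: "2 \<le> m" and a: "a \<in> lcs G (m - 1)" shows "hel m a \<in> generate (add_monoid L) Brs"
proof -
  obtain j where j: "m = Suc (Suc j)" using m by (metis add_2_eq_Suc le_Suc_ex)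
  have a': "a \<in> generate G (cset G j)" using a j lcs_Suc by simp
  have incl_br: "hel m (cm x y) \<in> generate (add_monoid L) Brs" if "x \<in> carrier G" "y \<in> lcs G j" for x y
  proof -
    have "hel 1 x \<otimes>\<^bsub>L\<^esub> hel (Suc j) y = hel (1 + Suc j) (cm x y)" by (rule br_hel) (use that in simp_all)
    then have "hel m (cm x y) = hel 1 x \<otimes>\<^bsub>L\<^esub> hel (Suc j) y" using j by simp
    moreover have "hel 1 x \<in> carrier L" "hel (Suc j) y \<in> carrier L" using that hel1_carrier hel_carrier by auto
    ultimately have "hel m (cm x y) \<in> Brs" unfolding Brs_def by blast
    then show ?thesis by (rule generate.incl)
  qed
  show ?thesis using a'
  proof (induction a rule: generate.induct)
    case one then show ?case using hel_one zero_gen by simp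
  next
    case (incl h)
    then show ?case using incl_br unfolding cset_def by blast
  next
    case (inv h)
    then obtain x y where xy: "h = cm x y" "x \<in> carrier G" "y \<in> lcs G j" unfolding cset_def by blast
    have h: "h \<in> lcs G (m - 1)" using xy cm_lcs j by simp
    have hc: "h \<in> carrier G" using h by simp
    have "inv h \<otimes> inv (h) \<in> lcs G m" using sq_lcs[of m "inv h"] h m by simp
    then have "lcs G m #> inv h = lcs G m #> h" using hc rcos_eq_iff[of "inv h" h m] by simp
    then have "hel m (inv h) = hel m h" by (rule hel_cong)
    then show ?case using incl_br xy by simp
  next
    case (eng h1 h2)
    have "h1 \<in> lcs G (m - 1)" "h2 \<in> lcs G (m - 1)" using eng.hyps j lcs_Suc by simp_all
    then have "hel m (h1 \<otimes> h2) = hel m h1 \<oplus>\<^bsub>L\<^esub> hel m h2" using hel_add by simp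
    then show ?case using generate.eng[OF eng.IH] by simp
  qed
qed

lemma kv_gen: assumes t: "kv t" shows "fel t \<in> generate (add_monoid L) Brs"
proof -
  define tr where "tr B = (\<lambda>k. if k \<le> B then t k else \<one>)" for B
  have rvt: "rv t" using t kv_rv by blast
  have rvtr: "rv (tr B)" for B using rv_closed[OF rvt] unfolding rv_def tr_def by (auto intro: exI[of _ B])
  have step: "fel (tr B) \<in> generate (add_monoid L) Brs" for B
  proof (induction B)
    case 0
    have "tr 0 = (\<lambda>_. \<one>)" using t by (auto simp: tr_def kv_def)
    then show ?case using zero_gen by (simp add: zero_fel')
  next
    case (Suc B)
    have e: "tr (Suc B) = (\<lambda>k. tr B k \<otimes> dl (Suc B) (t (Suc B)) k)"
      using rvt by (auto simp: tr_def dl_def)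
    have h: "hel (Suc B) (t (Suc B)) \<in> generate (add_monoid L) Brs"
    proof (cases "B = 0")
      case True then show ?thesis using t hel_one zero_gen by (simp add: kv_def)
    next
      case False then show ?thesis using hel_gen[of "Suc B" "t (Suc B)"] rv_closed[OF rvt, of "Suc B"] by simp
    qed
    have "fel (tr (Suc B)) = fel (tr B) \<oplus>\<^bsub>L\<^esub> hel (Suc B) (t (Suc B))"
      unfolding hel_def e by (rule add_fel[symmetric, OF rvtr rv_dl[OF rv_closed[OF rvt]]])
    then show ?case using generate.eng[OF Suc.IH h] by simp
  qed
  obtain B where B: "\<forall>k>B. t k = \<one>" using rvt by (auto simp: rv_def)
  have "tr B = t" using B by (auto simp: tr_def)
  then show ?thesis using step[of B] by simp
qed

lemma gen_ker: "generate (add_monoid L) Brs = lie_kernel L \<psi>"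
proof
  have "Brs \<subseteq> lie_kernel L \<psi>" unfolding Brs_def lie_kernel_def using br_closed br_ker by blast
  then show "generate (add_monoid L) Brs \<subseteq> lie_kernel L \<psi>"
    using La.add.generate_subgroup_incl[OF _ ker_subgroup] by simp
next
  show "lie_kernel L \<psi> \<subseteq> generate (add_monoid L) Brs"
  proof
    fix x assume "x \<in> lie_kernel L \<psi>"
    then obtain t where "kv t" "x = fel t" using ker_fel by (auto simp: lie_kernel_def)
    then show "x \<in> generate (add_monoid L) Brs" using kv_gen by simp
  qed
qed

end


context expgrp
begin

definition rp where "rp p = (SOME a. a \<in> carrier G \<and> p = hel 1 a)"

lemma rp: assumes "p \<in> LG_comp G 1" shows "rp p \<in> carrier G" "p = hel 1 (rp p)"
proof -
  obtain a where "a \<in> lcs G (1 - 1)" "p = hel 1 a" using comp_hel[OF assms] by blast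
  then have ex: "\<exists>a. a \<in> carrier G \<and> p = hel 1 a" by auto
  show "rp p \<in> carrier G" "p = hel 1 (rp p)" using someI_ex[OF ex] by (auto simp: rp_def)
qed

lemma nest_Cons: "zs \<noteq> [] \<Longrightarrow> nest L (p # zs) = p \<otimes>\<^bsub>L\<^esub> nest L zs"
  by (cases zs) auto

definition NF where "NF ps v = foldr (\<lambda>p w. cm (rp p) w) ps v"

lemma NF_Nil [simp]: "NF [] v = v" by (simp add: NF_def)
lemma NF_Cons [simp]: "NF (p # ps) v = cm (rp p) (NF ps v)" by (simp add: NF_def)

lemma NF_lcs: "set ps \<subseteq> LG_comp G 1 \<Longrightarrow> v \<in> lcs G k \<Longrightarrow> NF ps v \<in> lcs G (k + length ps)"
proof (induction ps)
  case Nil then show ?case by simp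
next
  case (Cons p ps)
  then have "NF ps v \<in> lcs G (k + length ps)" by simp
  then show ?case using cm_lcs[OF rp(1)] Cons.prems by simp
qed

lemma NF_A: "set ps \<subseteq> LG_comp G 1 \<Longrightarrow> v \<in> A \<Longrightarrow> NF ps v \<in> A"
  using NF_lcs[of ps v 1] lcs_A[of "1 + length ps"] by (simp add: A_lcs1)

lemma nest_eq: assumes ps: "set ps \<subseteq> LG_comp G 1" and a: "a \<in> LG_comp G 1" and b: "b \<in> LG_comp G 1"
  shows "nest L (ps @ [a, b]) = hel (Suc (Suc (length ps))) (NF ps (cm (rp a) (rp b)))"
  using ps
proof (induction ps)
  case Nil
  have "nest L [a, b] = hel 1 (rp a) \<otimes>\<^bsub>L\<^esub> hel 1 (rp b)" using rp a b by simp
  also have "\<dots> = hel (1 + 1) (cm (rp a) (rp b))" by (rule br_hel) (use rp a b in simp_all)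
  finally show ?case by simp
next
  case (Cons p ps)
  have IH: "nest L (ps @ [a, b]) = hel (Suc (Suc (length ps))) (NF ps (cm (rp a) (rp b)))"
    using Cons by simp
  have v: "NF ps (cm (rp a) (rp b)) \<in> lcs G (Suc (Suc (length ps)) - 1)"
    using NF_lcs[OF _ cm_lcs[OF rp(1)[OF a], of "rp b" 0]] Cons.prems rp(1)[OF b] by simp
  have "nest L ((p # ps) @ [a, b]) = p \<otimes>\<^bsub>L\<^esub> nest L (ps @ [a, b])" by (simp add: nest_Cons)
  also have "\<dots> = hel 1 (rp p) \<otimes>\<^bsub>L\<^esub> hel (Suc (Suc (length ps))) (NF ps (cm (rp a) (rp b)))"
    using IH rp Cons.prems by simp
  also have "\<dots> = hel (1 + Suc (Suc (length ps))) (cm (rp p) (NF ps (cm (rp a) (rp b))))"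
    by (rule br_hel) (use v rp Cons.prems in simp_all)
  finally show ?case by simp
qed

lemma NF_perm: assumes ps: "set ps \<subseteq> LG_comp G 1" and m: "mset ps = mset qs" and v: "v \<in> A"
  shows "NF ps v = NF qs v"
proof -
  define F where "F p w = (if w \<in> A then cm (rp p) w else w)" for p w
  have qs: "set qs \<subseteq> LG_comp G 1" using ps m by (metis mset_eq_setD)
  have NFF: "set xs \<subseteq> LG_comp G 1 \<Longrightarrow> NF xs v = foldr F xs v" for xs
  proof (induction xs)
    case Nil then show ?case by simp
  next
    case (Cons p xs)
    have eq: "NF xs v = foldr F xs v" using Cons by simp
    have "NF xs v \<in> A" using NF_A v Cons.prems by simp
    then have "foldr F xs v \<in> A" using eq by simp
    then have "F p (foldr F xs v) = cm (rp p) (foldr F xs v)" unfolding F_def[of p "foldr F xs v"] by simp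
    then show ?case using eq by simp
  qed
  have comm: "F x \<circ> F y = F y \<circ> F x" if "x \<in> set (rev ps)" "y \<in> set (rev ps)" for x y
  proof
    fix w
    have xy: "rp x \<in> carrier G" "rp y \<in> carrier G" using that ps rp by auto
    show "(F x \<circ> F y) w = (F y \<circ> F x) w"
      using xy GI6[OF xy] by (auto simp: F_def)
  qed
  have "foldr F ps v = foldr F qs v"
  proof -
    have "fold F (rev ps) = fold F (rev qs)"
      by (rule fold_multiset_equiv) (use comm m in simp_all)
    then show ?thesis unfolding foldr_conv_fold by simp
  qed
  then show ?thesis using NFF ps qs by simp
qed

lemma prop4a: assumes "set ps \<subseteq> LG_comp G 1" "set qs \<subseteq> LG_comp G 1" "a \<in> LG_comp G 1" "b \<in> LG_comp G 1"
  "mset ps = mset qs"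
  shows "nest L (ps @ [a, b]) = nest L (qs @ [a, b])"
proof -
  have l: "length ps = length qs" using assms(5) mset_eq_length by blast
  have v: "cm (rp a) (rp b) \<in> A" using rp assms by simp
  show ?thesis using nest_eq assms NF_perm[OF assms(1) assms(5) v] l by simp
qed

lemma prop4b: assumes ps: "set ps \<subseteq> LG_comp G 1" and a: "a \<in> LG_comp G 1" and b: "b \<in> LG_comp G 1"
  and nd: "\<not> distinct ps"
  shows "nest L (ps @ [a, b]) = \<zero>\<^bsub>L\<^esub>"
proof -
  obtain xs ys zs y where e: "ps = xs @ [y] @ ys @ [y] @ zs" using not_distinct_decomp[OF nd] by blast
  define qs where "qs = y # y # (xs @ ys @ zs)"
  have m: "mset ps = mset qs" by (simp add: e qs_def)
  have qs: "set qs \<subseteq> LG_comp G 1" using ps by (auto simp: e qs_def)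
  have y: "y \<in> LG_comp G 1" using ps by (auto simp: e)
  have w: "NF (xs @ ys @ zs) (cm (rp a) (rp b)) \<in> A" using NF_A qs rp a b by (simp add: qs_def)
  have "nest L (ps @ [a, b]) = nest L (qs @ [a, b])" using prop4a[OF ps qs a b m] .
  also have "\<dots> = hel (Suc (Suc (length qs))) (NF qs (cm (rp a) (rp b)))" using nest_eq[OF qs a b] .
  also have "NF qs (cm (rp a) (rp b)) = \<one>" using GI7[OF rp(1)[OF y] w] by (simp add: qs_def)
  finally show ?thesis by (simp add: hel_one)
qed

lemma GI9: "x \<in> carrier G \<Longrightarrow> y \<in> carrier G \<Longrightarrow> cm x (cm x y) = cm (x \<otimes> x) y"
  by (simp add: cm_mult_act cm_act)

lemma sq_basis: assumes i: "i \<in> {1..n}" and x: "x \<in> carrier G" and px: "\<phi> x = {i}"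
  shows "x \<otimes> x \<in> lcs G 2"
proof -
  define g where "g = gg i"
  have g: "g \<in> carrier G" "\<phi> g = {i}" "g \<otimes> g = \<one>"
    using EG i by (auto simp: expansion_group_def basis_vec_def g_def)
  have ig: "inv g = g" using g inv_equality by blast
  define a where "a = g \<otimes> x"
  have aA: "a \<in> A" using g x px by (simp add: a_def inA[unfolded A_lcs1] phi_mult)
  have xa: "x = g \<otimes> a" using g x by (simp add: a_def m_assoc[symmetric])
  have "x \<otimes> x = cm g a" using g aA xa ig by (simp add: commutator_def m_assoc)
  moreover have "cm g a \<in> lcs G (Suc 1)" using cm_lcs[OF g(1), of a 1] aA by (simp add: A_lcs1)
  ultimately show ?thesis by (simp add: numeral_2_eq_2)
qed

lemma prop4c: assumes t1: "t1 \<in> LG_comp G 1" and t2: "t2 \<in> LG_comp G 1"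
  and b: "\<psi> t1 \<in> basis_vec ` {1..n}"
  shows "t1 \<otimes>\<^bsub>L\<^esub> (t1 \<otimes>\<^bsub>L\<^esub> t2) = \<zero>\<^bsub>L\<^esub>"
proof -
  obtain i where i: "i \<in> {1..n}" "\<psi> t1 = {i}" using b by (auto simp: basis_vec_def)
  have x: "rp t1 \<in> carrier G" "rp t2 \<in> carrier G" using rp t1 t2 by auto
  have px: "\<phi> (rp t1) = {i}" using i psi_hel1[OF x(1)] rp(2)[OF t1] by simp
  have sq: "rp t1 \<otimes> rp t1 \<in> lcs G 2" by (rule sq_basis[OF i(1) x(1) px])
  have "cm (rp t1 \<otimes> rp t1) (rp t2) \<in> lcs G (Suc 2)" by (rule cm_lcs'[OF x(2) sq])
  then have c3: "NF [t1] (cm (rp t1) (rp t2)) \<in> lcs G (Suc (Suc 1))" using GI9[OF x] by (simp add: numeral_2_eq_2)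
  have "t1 \<otimes>\<^bsub>L\<^esub> (t1 \<otimes>\<^bsub>L\<^esub> t2) = nest L ([t1] @ [t1, t2])" by simp
  also have "\<dots> = hel (Suc (Suc (length [t1]))) (NF [t1] (cm (rp t1) (rp t2)))" by (rule nest_eq) (use t1 t2 in simp_all)
  also have "\<dots> = \<zero>\<^bsub>L\<^esub>" using hel_triv c3 by simp
  finally show ?thesis .
qed

end


context expgrp
begin

lemma main: "expansion_lie n L (LG_comp G) \<psi>"
proof -
  have F2: "graded_lie_F2 L (LG_comp G)"
    unfolding graded_lie_F2_def
  proof (intro conjI ballI allI impI)
    show "abelian_group L" by (rule L_abelian)
    show "\<And>x. x \<in> carrier L \<Longrightarrow> x \<oplus>\<^bsub>L\<^esub> x = \<zero>\<^bsub>L\<^esub>" by (rule add_self)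
    show "\<And>x y. x \<in> carrier L \<Longrightarrow> y \<in> carrier L \<Longrightarrow> x \<otimes>\<^bsub>L\<^esub> y \<in> carrier L" by (rule br_closed)
    show "\<And>x y z. x \<in> carrier L \<Longrightarrow> y \<in> carrier L \<Longrightarrow> z \<in> carrier L \<Longrightarrow>
      (x \<oplus>\<^bsub>L\<^esub> y) \<otimes>\<^bsub>L\<^esub> z = x \<otimes>\<^bsub>L\<^esub> z \<oplus>\<^bsub>L\<^esub> y \<otimes>\<^bsub>L\<^esub> z" by (rule br_add_l)
    show "\<And>x y z. x \<in> carrier L \<Longrightarrow> y \<in> carrier L \<Longrightarrow> z \<in> carrier L \<Longrightarrow>
      z \<otimes>\<^bsub>L\<^esub> (x \<oplus>\<^bsub>L\<^esub> y) = z \<otimes>\<^bsub>L\<^esub> x \<oplus>\<^bsub>L\<^esub> z \<otimes>\<^bsub>L\<^esub> y" by (rule br_add_r)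
    show "\<And>x. x \<in> carrier L \<Longrightarrow> x \<otimes>\<^bsub>L\<^esub> x = \<zero>\<^bsub>L\<^esub>" by (rule br_self)
    show "\<And>x y z. x \<in> carrier L \<Longrightarrow> y \<in> carrier L \<Longrightarrow> z \<in> carrier L \<Longrightarrow>
      x \<otimes>\<^bsub>L\<^esub> (y \<otimes>\<^bsub>L\<^esub> z) \<oplus>\<^bsub>L\<^esub> y \<otimes>\<^bsub>L\<^esub> (z \<otimes>\<^bsub>L\<^esub> x) \<oplus>\<^bsub>L\<^esub> z \<otimes>\<^bsub>L\<^esub> (x \<otimes>\<^bsub>L\<^esub> y) = \<zero>\<^bsub>L\<^esub>"
      using jacobi by (simp add: Jac_def)
    show "LG_comp G 0 = {\<zero>\<^bsub>L\<^esub>}" by (rule comp0)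
    show "\<And>m. subgroup (LG_comp G m) (add_monoid L)" by (rule comp_subgroup)
    show "\<And>h k x y. x \<in> LG_comp G h \<Longrightarrow> y \<in> LG_comp G k \<Longrightarrow> x \<otimes>\<^bsub>L\<^esub> y \<in> LG_comp G (h + k)"
      by (rule comp_br)
    show "\<And>x. x \<in> carrier L \<Longrightarrow> \<exists>!c. (\<forall>m. c m \<in> LG_comp G m) \<and> finite {m. c m \<noteq> \<zero>\<^bsub>L\<^esub>} \<and>
        x = (\<Oplus>\<^bsub>L\<^esub>m\<in>{m. c m \<noteq> \<zero>\<^bsub>L\<^esub>}. c m)"
      using decomp_unique by simp
  qed
  have H: "graded_lie_hom L (LG_comp G) (Vlie n) (Vcomp n) \<psi>"
    unfolding graded_lie_hom_def
  proof (intro conjI ballI allI)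
    show "\<psi> \<in> carrier L \<rightarrow> carrier (Vlie n)" using psi_carrier by (auto simp: Vlie_def)
    show "\<And>x y. x \<in> carrier L \<Longrightarrow> y \<in> carrier L \<Longrightarrow> \<psi> (x \<oplus>\<^bsub>L\<^esub> y) = \<psi> x \<oplus>\<^bsub>Vlie n\<^esub> \<psi> y"
      using psi_add by (simp add: Vlie_def)
    show "\<And>x y. x \<in> carrier L \<Longrightarrow> y \<in> carrier L \<Longrightarrow> \<psi> (x \<otimes>\<^bsub>L\<^esub> y) = \<psi> x \<otimes>\<^bsub>Vlie n\<^esub> \<psi> y"
      using br_ker by (simp add: Vlie_def)
    fix m
    show "\<psi> ` LG_comp G m \<subseteq> Vcomp n m"
    proof (cases "m = 1")
      case True
      show ?thesis
      proof
        fix y assume "y \<in> \<psi> ` LG_comp G m"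
        then obtain x where x: "x \<in> LG_comp G m" "y = \<psi> x" by blast
        have "y \<in> Pow {1..n}" using psi_carrier[OF comp_carrier[OF x(1)]] x(2) by simp
        then show "y \<in> Vcomp n m" using True by (simp add: Vcomp_def)
      qed
    next
      case False
      show ?thesis
      proof
        fix y assume "y \<in> \<psi> ` LG_comp G m"
        then obtain x where x: "x \<in> LG_comp G m" "y = \<psi> x" by blast
        have "y = {}" using psi_comp[OF False x(1)] x(2) by simp
        then show "y \<in> Vcomp n m" using False by (simp add: Vcomp_def)
      qed
    qed
  qed
  have S: "\<psi> ` carrier L = carrier (Vlie n)" using psi_surj by (simp add: Vlie_def)
  have Gn: "generate (add_monoid L) {x \<otimes>\<^bsub>L\<^esub> y | x y. x \<in> carrier L \<and> y \<in> carrier L} = lie_kernel L \<psi>"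
    using gen_ker by (simp add: Brs_def)
  have P4a: "\<forall>ps qs a b. 2 \<le> length ps \<longrightarrow> set ps \<subseteq> LG_comp G 1 \<longrightarrow> set qs \<subseteq> LG_comp G 1 \<longrightarrow>
        a \<in> LG_comp G 1 \<longrightarrow> b \<in> LG_comp G 1 \<longrightarrow> mset ps = mset qs \<longrightarrow>
        nest L (ps @ [a, b]) = nest L (qs @ [a, b])"
    using prop4a by blast
  have P4b: "\<forall>ps a b. 2 \<le> length ps \<longrightarrow> set ps \<subseteq> LG_comp G 1 \<longrightarrow>
        a \<in> LG_comp G 1 \<longrightarrow> b \<in> LG_comp G 1 \<longrightarrow> \<not> distinct ps \<longrightarrow>
        nest L (ps @ [a, b]) = \<zero>\<^bsub>L\<^esub>"
    using prop4b by blast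
  have P4c: "\<forall>t1\<in>LG_comp G 1. \<forall>t2\<in>LG_comp G 1. \<psi> t1 \<in> basis_vec ` {1..n} \<longrightarrow>
        t1 \<otimes>\<^bsub>L\<^esub> (t1 \<otimes>\<^bsub>L\<^esub> t2) = \<zero>\<^bsub>L\<^esub>"
    using prop4c by blast
  have KZ: "\<forall>x\<in>lie_kernel L \<psi>. \<forall>y\<in>lie_kernel L \<psi>. x \<otimes>\<^bsub>L\<^esub> y = \<zero>\<^bsub>L\<^esub>"
    using ker_br_zero by blast
  show ?thesis unfolding expansion_lie_def
    by (intro conjI F2 H S ker_subgroup KZ Gn P4a P4b P4c)
qed

end

theorem proposition3p3:
  fixes n :: nat and G :: "('g, 'b) monoid_scheme" and \<phi> :: "'g \<Rightarrow> nat set"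
    and g :: "nat \<Rightarrow> 'g"
  assumes "expansion_group n G \<phi> g"
  shows "expansion_lie n (LG G) (LG_comp G) (Lphi G \<phi>)"
proof -
  interpret expgrp G n \<phi> g
    by (rule expgrp.intro) (use assms in \<open>auto simp: expansion_group_def expgrp_axioms_def\<close>)
  show ?thesis by (rule main)
qed


end
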